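(* Let $f:U\to\mathbb{L}^3$ be a minface with real Weierstrass data $(g_1,g_2,\hat\omega_1du,\hat\omega_2dv)$, and let $\gamma(t)=(\gamma_1(t),\gamma_2(t))$ be the singular curve passing through a cuspidal edge $p=\gamma(0)$ (so that $\gamma$ consists of cuspidal edges near $t=0$). Then the Gaussian curvature $K$ of $f$ (at regular points near $\gamma$) and the singular curvature $\kappa_s$ of $\gamma$ have the same sign. In particular, $\kappa_s(t)=0$ if and only if $g_1'(\gamma_1(t))=0$ or $g_2'(\gamma_2(t))=0$.
   Context: $\mathbb{L}^3$ is $\mathbb{R}^3$ with the Lorentzian metric $-(dx^0)^2+(dx^1)^2+(dx^2)^2$. $U\subset\mathbb{R}^2$ is a domain with coordinates $(u,v)$; $f:U\to\mathbb{L}^3$ is a minface with real Weierstrass data $(g_1,g_2,\hat\omega_1du,\hat\omega_2dv)$ if $g_1=g_1(u)$, $g_2=g_2(v)$ are smooth, $\hat\omega_1=\hat\omega_1(u)$, $\hat\omega_2=\hat\omega_2(v)$ are smooth and nowhere zero, $g_1g_2\neq1$ on an open dense set, and $f(u,v)=\frac12\int_{u_0}^u(-1-g_1^2,1-g_1^2,2g_1)\hat\omega_1du+\frac12\int_{v_0}^v(1+g_2^2,1-g_2^2,-2g_2)\hat\omega_2dv+f(u_0,v_0)$. Singular points (where $f$ is not an immersion) are exactly the points with $g_1g_2=1$; at regular points $f$ is a timelike immersion with zero mean curvature, with Gaussian curvature $K=\det S$ ($S$ the shape operator w.r.t. a spacelike unit normal). Identify $\mathbb{L}^3$ with Euclidean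 $\mathbb{R}^3$ with Euclidean inner product $\langle\,,\,\rangle_E$. Then $n=\big((1-g_1g_2)^2+2(g_1+g_2)^2\big)^{-1/2}(-g_1-g_2,\,g_1-g_2,\,-1-g_1g_2)$ is a Euclidean unit normal field of $f$; set $\lambda=\det(f_u,f_v,n)$. A singular point is a cuspidal edge if the germ of $f$ there is $\mathcal{A}$-equivalent (equal up to local diffeomorphisms of source and target) to the germ of $(u,v)\mapsto(u^2,u^3,v)$ at the origin. The singular curve is a regular curve $\gamma$ in $U$ parametrizing the singular set near $p$; a null vector field $\eta(t)$ is a nonzero vector field along $\gamma$ with $\eta(t)\in\ker df_{\gamma(t)}$, chosen so that $(\gamma'(t),\eta(t))$ is positively oriented. The singular curvature is $\kappa_s(t)=\mathrm{sgn}(d\lambda(\eta(t)))\,\dfrac{\det(\hat\gamma'(t),\hat\gamma''(t),n(\gamma(t)))}{|\hat\gamma'(t)|^3}$, where $\hat\gamma=f\circ\gamma$ and $|\cdot|$ is the Euclidean norm. *)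

theory Defs
  imports "HOL-Analysis.Analysis"
begin

fun Ck :: "nat \<Rightarrow> 'a::real_normed_vector set \<Rightarrow> ('a \<Rightarrow> 'b::real_normed_vector) \<Rightarrow> bool" where
  "Ck 0 S h = continuous_on S h"
| "Ck (Suc n) S h = ((\<forall>x\<in>S. h differentiable (at x)) \<and>
                      (\<forall>v. Ck n S (\<lambda>x. frechet_derivative h (at x) v)))"

definition smooth_on :: "'a::real_normed_vector set \<Rightarrow> ('a \<Rightarrow> 'b::real_normed_vector) \<Rightarrow> bool" where
  "smooth_on S h \<longleftrightarrow> (\<forall>n. Ck n S h)"

(* Lorentzian inner product -(dx0)^2 + (dx1)^2 + (dx2)^2 on real^3 (components 1,2,3) *)
definition lor :: "real^3 \<Rightarrow> real^3 \<Rightarrow> real" where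
  "lor x y = - x$1 * y$1 + x$2 * y$2 + x$3 * y$3"

definition det3 :: "real^3 \<Rightarrow> real^3 \<Rightarrow> real^3 \<Rightarrow> real" where
  "det3 a b c = det (vector [a, b, c] :: real^3^3)"

definition pdu :: "(real \<times> real \<Rightarrow> 'b::real_normed_vector) \<Rightarrow> real \<times> real \<Rightarrow> 'b" where
  "pdu h q = frechet_derivative h (at q) (1, 0)"

definition pdv :: "(real \<times> real \<Rightarrow> 'b::real_normed_vector) \<Rightarrow> real \<times> real \<Rightarrow> 'b" where
  "pdv h q = frechet_derivative h (at q) (0, 1)"

definition oint :: "real \<Rightarrow> real \<Rightarrow> (real \<Rightarrow> real^3) \<Rightarrow> real^3" where
  "oint a b h = (if a \<le> b then integral {a..b} h else - integral {b..a} h)"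

definition minface_real_W ::
  "(real \<times> real) set \<Rightarrow> (real \<Rightarrow> real) \<Rightarrow> (real \<Rightarrow> real) \<Rightarrow> (real \<Rightarrow> real) \<Rightarrow> (real \<Rightarrow> real)
   \<Rightarrow> (real \<times> real \<Rightarrow> real^3) \<Rightarrow> bool" where
  "minface_real_W U g1 g2 w1 w2 f \<longleftrightarrow>
     open U \<and> connected U \<and> U \<noteq> {} \<and>
     smooth_on (fst ` U) g1 \<and> smooth_on (snd ` U) g2 \<and>
     smooth_on (fst ` U) w1 \<and> smooth_on (snd ` U) w2 \<and>
     (\<forall>u\<in>fst ` U. w1 u \<noteq> 0) \<and> (\<forall>v\<in>snd ` U. w2 v \<noteq> 0) \<and>
     U \<subseteq> closure {q\<in>U. g1 (fst q) * g2 (snd q) \<noteq> 1} \<and>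
     (\<exists>u0 v0. (u0, v0) \<in> U \<and>
        (\<forall>u v. (u, v) \<in> U \<longrightarrow>
           f (u, v) =
             oint u0 u (\<lambda>s. (w1 s / 2) *\<^sub>R vector [-1 - (g1 s)\<^sup>2, 1 - (g1 s)\<^sup>2, 2 * g1 s])
           + oint v0 v (\<lambda>s. (w2 s / 2) *\<^sub>R vector [1 + (g2 s)\<^sup>2, 1 - (g2 s)\<^sup>2, -2 * g2 s])
           + f (u0, v0)))"

definition sing_set :: "(real \<times> real) set \<Rightarrow> (real \<Rightarrow> real) \<Rightarrow> (real \<Rightarrow> real) \<Rightarrow> (real \<times> real) set" where
  "sing_set U g1 g2 = {q\<in>U. g1 (fst q) * g2 (snd q) = 1}"

definition enormal :: "(real \<Rightarrow> real) \<Rightarrow> (real \<Rightarrow> real) \<Rightarrow> real \<times> real \<Rightarrow> real^3" where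
  "enormal g1 g2 q = (let a = g1 (fst q); b = g2 (snd q) in
     (1 / sqrt ((1 - a * b)\<^sup>2 + 2 * (a + b)\<^sup>2)) *\<^sub>R vector [- a - b, a - b, -1 - a * b])"

definition lam :: "(real \<times> real \<Rightarrow> real^3) \<Rightarrow> (real \<Rightarrow> real) \<Rightarrow> (real \<Rightarrow> real) \<Rightarrow> real \<times> real \<Rightarrow> real" where
  "lam f g1 g2 q = det3 (pdu f q) (pdv f q) (enormal g1 g2 q)"

(* Gaussian curvature K = det S, S = I^{-1} II the shape operator w.r.t. a spacelike
   (Lorentzian) unit normal nu; det S = (LN - M^2)/(EG - F^2), independent of the sign of nu *)
definition gaussK :: "(real \<times> real \<Rightarrow> real^3) \<Rightarrow> real \<times> real \<Rightarrow> real" where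
  "gaussK f q = (let fu = pdu f q; fv = pdv f q;
       fuu = pdu (pdu f) q; fuv = pdv (pdu f) q; fvv = pdv (pdv f) q;
       nu = (SOME nu. lor nu fu = 0 \<and> lor nu fv = 0 \<and> lor nu nu = 1);
       E = lor fu fu; F = lor fu fv; G = lor fv fv;
       L = lor fuu nu; M = lor fuv nu; N = lor fvv nu
     in (L * N - M\<^sup>2) / (E * G - F\<^sup>2))"

definition cusp_std :: "real \<times> real \<Rightarrow> real^3" where
  "cusp_std w = vector [(fst w)\<^sup>2, (fst w) ^ 3, snd w]"

(* the germ of f at p is A-equivalent to the germ of (u,v) |-> (u^2,u^3,v) at 0 *)
definition cuspidal_edge :: "(real \<times> real) set \<Rightarrow> (real \<times> real \<Rightarrow> real^3) \<Rightarrow> real \<times> real \<Rightarrow> bool" where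
  "cuspidal_edge U f p \<longleftrightarrow> p \<in> U \<and>
     (\<exists>W V (\<phi> :: real \<times> real \<Rightarrow> real \<times> real) \<psi> Y1 Y2 (\<Phi> :: real^3 \<Rightarrow> real^3) \<Psi>.
        open W \<and> (0, 0) \<in> W \<and> open V \<and> V \<subseteq> U \<and> \<phi> (0, 0) = p \<and>
        \<phi> ` W = V \<and> \<psi> ` V = W \<and>
        smooth_on W \<phi> \<and> smooth_on V \<psi> \<and>
        (\<forall>w\<in>W. \<psi> (\<phi> w) = w) \<and> (\<forall>x\<in>V. \<phi> (\<psi> x) = x) \<and>
        open Y1 \<and> open Y2 \<and> f ` V \<subseteq> Y1 \<and> \<Phi> ` Y1 = Y2 \<and> \<Psi> ` Y2 = Y1 \<and>
        smooth_on Y1 \<Phi> \<and> smooth_on Y2 \<Psi> \<and>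
        (\<forall>y\<in>Y1. \<Psi> (\<Phi> y) = y) \<and> (\<forall>z\<in>Y2. \<Phi> (\<Psi> z) = z) \<and>
        (\<forall>w\<in>W. \<Phi> (f (\<phi> w)) = cusp_std w))"

definition sing_curv ::
  "(real \<times> real \<Rightarrow> real^3) \<Rightarrow> (real \<Rightarrow> real) \<Rightarrow> (real \<Rightarrow> real) \<Rightarrow> (real \<Rightarrow> real \<times> real)
   \<Rightarrow> (real \<Rightarrow> real \<times> real) \<Rightarrow> real \<Rightarrow> real" where
  "sing_curv f g1 g2 \<gamma> \<eta> t =
     (let gh = f \<circ> \<gamma>;
          d1 = vector_derivative gh (at t);
          d2 = vector_derivative (\<lambda>s. vector_derivative gh (at s)) (at t)
      in sgn (frechet_derivative (lam f g1 g2) (at (\<gamma> t)) (\<eta> t))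
         * det3 d1 d2 (enormal g1 g2 (\<gamma> t)) / norm d1 ^ 3)"

end

theory Submission
  imports Defs
begin
lemma smooth_real:
  fixes h :: "real \<Rightarrow> real"
  assumes "smooth_on S h" "open S"
  shows "\<And>x. x\<in>S \<Longrightarrow> (h has_real_derivative deriv h x) (at x)"
    and "continuous_on S (deriv h)" and "continuous_on S h"
proof -
  have C2: "Ck 2 S h" and C0: "Ck 0 S h" using assms(1) unfolding smooth_on_def by blast+
  then have d: "\<forall>x\<in>S. h differentiable (at x)" and c1: "Ck 1 S (\<lambda>x. frechet_derivative h (at x) 1)"
    by (simp_all add: numeral_2_eq_2)
  show D: "\<And>x. x\<in>S \<Longrightarrow> (h has_real_derivative deriv h x) (at x)"
    using d DERIV_deriv_iff_real_differentiable by blast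
  have eq: "frechet_derivative h (at x) 1 = deriv h x" if "x\<in>S" for x
  proof -
    have "(h has_derivative (*) (deriv h x)) (at x)" using D[OF that] by (simp add: has_field_derivative_def)
    from frechet_derivative_at[OF this] show ?thesis by (metis mult.right_neutral)
  qed
  have "\<forall>x\<in>S. (\<lambda>x. frechet_derivative h (at x) 1) differentiable (at x)" using c1 by simp
  then have "continuous_on S (\<lambda>x. frechet_derivative h (at x) 1)"
    by (simp add: continuous_at_imp_continuous_on differentiable_imp_continuous_within)
  then show "continuous_on S (deriv h)" using continuous_on_cong eq by (metis (mono_tags, lifting))
  show "continuous_on S h" using C0 by simp
qed

lemma smooth_curve:
  fixes \<gamma> :: "real \<Rightarrow> real \<times> real"
  assumes "smooth_on I \<gamma>" "open I" "t \<in> I"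
  shows "(\<gamma> has_vector_derivative vector_derivative \<gamma> (at t)) (at t)"
    and "((\<lambda>s. vector_derivative \<gamma> (at s)) has_vector_derivative
           vector_derivative (\<lambda>s. vector_derivative \<gamma> (at s)) (at t)) (at t)"
proof -
  have C2: "Ck 2 I \<gamma>" using assms(1) unfolding smooth_on_def by blast
  then have d: "\<forall>x\<in>I. \<gamma> differentiable (at x)" and c1: "Ck 1 I (\<lambda>x. frechet_derivative \<gamma> (at x) 1)"
    by (simp_all add: numeral_2_eq_2)
  show "(\<gamma> has_vector_derivative vector_derivative \<gamma> (at t)) (at t)"
    using d assms(3) vector_derivative_works by blast
  have eq: "frechet_derivative \<gamma> (at x) 1 = vector_derivative \<gamma> (at x)" if "x\<in>I" for x
  proof -
    have "(\<gamma> has_vector_derivative vector_derivative \<gamma> (at x)) (at x)"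
      using d that vector_derivative_works by blast
    then have "(\<gamma> has_derivative (\<lambda>h. h *\<^sub>R vector_derivative \<gamma> (at x))) (at x)"
      by (simp add: has_vector_derivative_def)
    from frechet_derivative_at[OF this] show ?thesis by (metis scale_one)
  qed
  have "(\<lambda>x. frechet_derivative \<gamma> (at x) 1) differentiable (at t)" using c1 assms(3) by simp
  then obtain D where "((\<lambda>x. frechet_derivative \<gamma> (at x) 1) has_vector_derivative D) (at t)"
    using vector_derivative_works by blast
  then have "((\<lambda>s. vector_derivative \<gamma> (at s)) has_vector_derivative D) (at t)"
    by (rule has_vector_derivative_transform_within_open[OF _ assms(2,3)]) (simp add: eq)
  then show "((\<lambda>s. vector_derivative \<gamma> (at s)) has_vector_derivative
           vector_derivative (\<lambda>s. vector_derivative \<gamma> (at s)) (at t)) (at t)"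
    using vector_derivative_at by fastforce
qed



lemma oint_deriv:
  fixes a :: "real \<Rightarrow> real^3"
  assumes S: "open S" "is_interval S" "u0 \<in> S" "u \<in> S" and ca: "continuous_on S a"
  shows "((\<lambda>x. oint u0 x a) has_vector_derivative a u) (at u)"
proof -
  obtain e where e: "e > 0" "ball u e \<subseteq> S" using S(1,4) open_contains_ball by blast
  define c where "c = min u0 (u - e/2)"
  define b where "b = max u0 (u + e/2)"
  have "u - e/2 \<in> ball u e" "u + e/2 \<in> ball u e" using e(1) by (simp_all add: dist_real_def)
  then have "u - e/2 \<in> S" "u + e/2 \<in> S" using e(2) by blast+
  then have cS: "c \<in> S" and bS: "b \<in> S" using S(3) unfolding c_def b_def by (simp_all add: min_def max_def)
  have sub: "{c..b} \<subseteq> S" using cS bS S(2) unfolding is_interval_1 by (meson atLeastAtMost_iff subsetI)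
  have cab: "continuous_on {c..b} a" using continuous_on_subset[OF ca sub] .
  have cu: "c < u" "u < b" using e(1) unfolding c_def b_def by simp_all
  have u0cb: "u0 \<in> {c..b}" unfolding c_def b_def by simp
  have int: "a integrable_on {x..y}" if "c \<le> x" "y \<le> b" for x y
    by (rule integrable_continuous_real[OF continuous_on_subset[OF cab]]) (use that in auto)
  have eq: "integral {c..x} a - integral {c..u0} a = oint u0 x a" if "x \<in> {c<..<b}" for x
  proof (cases "u0 \<le> x")
    case True
    have "integral {c..u0} a + integral {u0..x} a = integral {c..x} a"
      by (rule Henstock_Kurzweil_Integration.integral_combine) (use that u0cb True in \<open>auto intro!: int\<close>)
    then show ?thesis using True by (simp add: oint_def algebra_simps)
  next
    case False
    have "integral {c..x} a + integral {x..u0} a = integral {c..u0} a"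
      by (rule Henstock_Kurzweil_Integration.integral_combine) (use that u0cb False in \<open>auto intro!: int\<close>)
    then show ?thesis using False by (simp add: oint_def algebra_simps)
  qed
  have "((\<lambda>x. integral {c..x} a) has_vector_derivative a u) (at u within {c..b})"
    using integral_has_vector_derivative[OF cab] cu by auto
  then have "((\<lambda>x. integral {c..x} a) has_vector_derivative a u) (at u within {c<..<b})"
    by (rule has_vector_derivative_within_subset) auto
  then have "((\<lambda>x. integral {c..x} a) has_vector_derivative a u) (at u)"
    using at_within_open[of u "{c<..<b}"] cu by simp
  then have "((\<lambda>x. integral {c..x} a - integral {c..u0} a) has_vector_derivative a u - 0) (at u)"
    by (intro derivative_intros)
  then have "((\<lambda>x. integral {c..x} a - integral {c..u0} a) has_vector_derivative a u) (at u)" by simp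
  then show ?thesis
    by (rule has_vector_derivative_transform_within_open[of _ _ _ "{c<..<b}"]) (use cu eq in auto)
qed


lemma vec3_decomp: "(vector [x, y, z] :: real^3) = x *\<^sub>R vector [1,0,0] + y *\<^sub>R vector [0,1,0] + z *\<^sub>R vector [0,0,1]"
  by (simp add: vec_eq_iff forall_3)

lemma comp_fst_vd:
  assumes "(A has_vector_derivative d) (at (fst q))"
  shows "((\<lambda>x. A (fst x)) has_derivative (\<lambda>h. fst h *\<^sub>R d)) (at q)"
proof -
  have "(fst has_derivative fst) (at q)" by (rule has_derivative_fst[OF has_derivative_ident])
  from diff_chain_at[OF this assms[unfolded has_vector_derivative_def]]
  show ?thesis by (simp add: o_def)
qed

lemma comp_snd_vd:
  assumes "(A has_vector_derivative d) (at (snd q))"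
  shows "((\<lambda>x. A (snd x)) has_derivative (\<lambda>h. snd h *\<^sub>R d)) (at q)"
proof -
  have "(snd has_derivative snd) (at q)" by (rule has_derivative_snd[OF has_derivative_ident])
  from diff_chain_at[OF this assms[unfolded has_vector_derivative_def]]
  show ?thesis by (simp add: o_def)
qed

lemma comp_fst_rd:
  assumes "(g has_real_derivative d) (at (fst q))"
  shows "((\<lambda>x. g (fst x)) has_derivative (\<lambda>h. fst h * d)) (at q)"
  using comp_fst_vd[of g d q] assms by (simp add: has_real_derivative_iff_has_vector_derivative)

lemma comp_snd_rd:
  assumes "(g has_real_derivative d) (at (snd q))"
  shows "((\<lambda>x. g (snd x)) has_derivative (\<lambda>h. snd h * d)) (at q)"
  using comp_snd_vd[of g d q] assms by (simp add: has_real_derivative_iff_has_vector_derivative)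

definition Pv :: "real \<Rightarrow> real^3" where "Pv a = vector [-1 - a\<^sup>2, 1 - a\<^sup>2, 2 * a]"
definition Qv :: "real \<Rightarrow> real^3" where "Qv b = vector [1 + b\<^sup>2, 1 - b\<^sup>2, -2 * b]"
definition Pa :: "real \<Rightarrow> real^3" where "Pa a = vector [-2 * a, -2 * a, 2]"
definition Qb :: "real \<Rightarrow> real^3" where "Qb b = vector [2 * b, -2 * b, -2]"

lemma Pv_poly: "Pv a = vector [-1,1,0] + a *\<^sub>R vector [0,0,2] + a\<^sup>2 *\<^sub>R vector [-1,-1,0]"
  by (simp add: Pv_def vec_eq_iff forall_3)
lemma Qv_poly: "Qv a = vector [1,1,0] + a *\<^sub>R vector [0,0,-2] + a\<^sup>2 *\<^sub>R vector [1,-1,0]"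
  by (simp add: Qv_def vec_eq_iff forall_3)

lemma poly_deriv:
  assumes "(g has_real_derivative dg) (at x)" "(w has_real_derivative dw) (at x)"
  shows "((\<lambda>s. (w s / 2) *\<^sub>R (K0 + g s *\<^sub>R K1 + (g s)\<^sup>2 *\<^sub>R K2)) has_vector_derivative
          (w x / 2) *\<^sub>R (dg *\<^sub>R K1 + (2 * g x * dg) *\<^sub>R K2) + (dw / 2) *\<^sub>R (K0 + g x *\<^sub>R K1 + (g x)\<^sup>2 *\<^sub>R K2)) (at x)"
proof -
  have a: "((\<lambda>s. w s / 2) has_real_derivative dw / 2) (at x)" using assms(2) by (auto intro!: derivative_eq_intros)
  have b: "((\<lambda>s. (g s)\<^sup>2) has_real_derivative 2 * g x * dg) (at x)" using assms(1) by (auto intro!: derivative_eq_intros)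
  have c: "((\<lambda>s. g s *\<^sub>R K1) has_vector_derivative dg *\<^sub>R K1) (at x)"
    using has_vector_derivative_scaleR[OF assms(1) has_vector_derivative_const[of K1]] by simp
  have d: "((\<lambda>s. (g s)\<^sup>2 *\<^sub>R K2) has_vector_derivative (2 * g x * dg) *\<^sub>R K2) (at x)"
    using has_vector_derivative_scaleR[OF b has_vector_derivative_const[of K2]] by simp
  have e: "((\<lambda>s. K0 + g s *\<^sub>R K1 + (g s)\<^sup>2 *\<^sub>R K2) has_vector_derivative dg *\<^sub>R K1 + (2 * g x * dg) *\<^sub>R K2) (at x)"
    using has_vector_derivative_add[OF has_vector_derivative_add[OF has_vector_derivative_const c] d] by simp
  show ?thesis using has_vector_derivative_scaleR[OF a e] .
qed

lemma Pv_deriv: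
  assumes "(g has_real_derivative dg) (at x)" "(w has_real_derivative dw) (at x)"
  shows "((\<lambda>s. (w s / 2) *\<^sub>R Pv (g s)) has_vector_derivative
          (dw / 2) *\<^sub>R Pv (g x) + (w x / 2) *\<^sub>R (dg *\<^sub>R Pa (g x))) (at x)"
proof -
  note poly_deriv[OF assms, of "vector [-1,1,0]::real^3" "vector [0,0,2]::real^3" "vector [-1,-1,0]::real^3"]
  moreover have "(w x / 2) *\<^sub>R (dg *\<^sub>R vector [0,0,2] + (2 * g x * dg) *\<^sub>R vector [-1,-1,0]) + (dw / 2) *\<^sub>R Pv (g x)
     = (dw / 2) *\<^sub>R Pv (g x) + (w x / 2) *\<^sub>R (dg *\<^sub>R Pa (g x))"
    by (simp add: Pa_def vec_eq_iff forall_3 algebra_simps)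
  ultimately show ?thesis unfolding Pv_poly[symmetric] by metis
qed

lemma Qv_deriv:
  assumes "(g has_real_derivative dg) (at x)" "(w has_real_derivative dw) (at x)"
  shows "((\<lambda>s. (w s / 2) *\<^sub>R Qv (g s)) has_vector_derivative
          (dw / 2) *\<^sub>R Qv (g x) + (w x / 2) *\<^sub>R (dg *\<^sub>R Qb (g x))) (at x)"
proof -
  note poly_deriv[OF assms, of "vector [1,1,0]::real^3" "vector [0,0,-2]::real^3" "vector [1,-1,0]::real^3"]
  moreover have "(w x / 2) *\<^sub>R (dg *\<^sub>R vector [0,0,-2] + (2 * g x * dg) *\<^sub>R vector [1,-1,0]) + (dw / 2) *\<^sub>R Qv (g x)
     = (dw / 2) *\<^sub>R Qv (g x) + (w x / 2) *\<^sub>R (dg *\<^sub>R Qb (g x))"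
    by (simp add: Qb_def vec_eq_iff forall_3 algebra_simps)
  ultimately show ?thesis unfolding Qv_poly[symmetric] by metis
qed


lemma lor_comp: "lor u v = - u$1 * v$1 + u$2 * v$2 + u$3 * v$3" by (simp add: lor_def)

lemma aux1: fixes k c :: real shows "0 * 0 - (k/2 * c^2)\<^sup>2 = -(k*k*c^4/4)"
  by (simp add: power_mult_distrib power_divide power2_eq_square[of k] flip: power_mult)

lemma K_alg:
  fixes nu :: "real^3" and a b w1 w2 dw1 dw2 d1 d2 :: real
  assumes ab: "a*b \<noteq> 1" and w: "w1 \<noteq> 0" "w2 \<noteq> 0"
    and o1: "lor nu ((w1/2) *\<^sub>R Pv a) = 0" and o2: "lor nu ((w2/2) *\<^sub>R Qv b) = 0" and o3: "lor nu nu = 1"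
  shows "(lor ((dw1/2) *\<^sub>R Pv a + (w1/2) *\<^sub>R (d1 *\<^sub>R Pa a)) nu * lor ((dw2/2) *\<^sub>R Qv b + (w2/2) *\<^sub>R (d2 *\<^sub>R Qb b)) nu - (lor 0 nu)\<^sup>2)
    / (lor ((w1/2) *\<^sub>R Pv a) ((w1/2) *\<^sub>R Pv a) * lor ((w2/2) *\<^sub>R Qv b) ((w2/2) *\<^sub>R Qv b) - (lor ((w1/2) *\<^sub>R Pv a) ((w2/2) *\<^sub>R Qv b))\<^sup>2)
    = 4 * d1 * d2 / (w1 * w2 * (1 - a*b)^4)"
proof -
  define x where "x = nu$1"
  define y where "y = nu$2"
  define z where "z = nu$3"
  have E1: "(1+a^2)*x + (1-a^2)*y + 2*a*z = 0"
  proof -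
    have "w1/2 * ((1+a^2)*x + (1-a^2)*y + 2*a*z) = 0" using o1 by (simp add: lor_comp Pv_def x_def y_def z_def algebra_simps)
    then show ?thesis using w by simp
  qed
  have E2: "-(1+b^2)*x + (1-b^2)*y - 2*b*z = 0"
  proof -
    have "w2/2 * (-(1+b^2)*x + (1-b^2)*y - 2*b*z) = 0" using o2 by (simp add: lor_comp Qv_def x_def y_def z_def algebra_simps)
    then show ?thesis using w by simp
  qed
  define T where "T = 2*a*x - 2*a*y + 2*z"
  have nz: "1 - a*b \<noteq> 0" using ab by simp
  have X: "2*(1-a*b)*x = - T*(a+b)"
  proof -
    have "(1-a*b) * (2*(1-a*b)*x + T*(a+b)) = 0" using E1 E2 T_def by algebra
    then show ?thesis using nz by simp
  qed
  have Y: "2*(1-a*b)*y = - T*(a-b)"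
  proof -
    have "(1-a*b) * (2*(1-a*b)*y + T*(a-b)) = 0" using E1 E2 T_def by algebra
    then show ?thesis using nz by simp
  qed
  have Z: "2*(1-a*b)*z = T*(1+a*b)"
  proof -
    have "(1-a*b) * (2*(1-a*b)*z - T*(1+a*b)) = 0" using E1 E2 T_def by algebra
    then show ?thesis using nz by simp
  qed
  have n3: "-x*x + y*y + z*z = 1" using o3 by (simp add: lor_comp x_def y_def z_def)
  have T2: "T^2 = 4"
  proof -
    have "4*(1-a*b)^2 * (-x*x + y*y + z*z) = T^2 * (1-a*b)^2"
    proof -
      have "4*(1-a*b)^2 * (-x*x + y*y + z*z) = (2*(1-a*b)*y)^2 + (2*(1-a*b)*z)^2 - (2*(1-a*b)*x)^2"
        by (simp add: power2_eq_square algebra_simps)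
      also have "\<dots> = T^2 * (1-a*b)^2" unfolding X Y Z by (simp add: power2_eq_square algebra_simps)
      finally show ?thesis .
    qed
    then have "4*(1-a*b)^2 = T^2 * (1-a*b)^2" unfolding n3 by (simp only: mult_1_right)
    moreover have "(1-a*b)^2 \<noteq> 0" using nz by simp
    ultimately show ?thesis by (metis mult_cancel_right)
  qed
  have LQ: "2*b*x + 2*b*y + 2*z = T"
  proof -
    have "2*(1-a*b)*(2*b*x + 2*b*y + 2*z) = 2*b*(2*(1-a*b)*x) + 2*b*(2*(1-a*b)*y) + 2*(2*(1-a*b)*z)"
      by (simp add: algebra_simps)
    also have "\<dots> = 2*(1-a*b)*T" unfolding X Y Z by (simp add: algebra_simps)
    finally show ?thesis using nz by simp
  qed
  have L: "lor ((dw1/2) *\<^sub>R Pv a + (w1/2) *\<^sub>R (d1 *\<^sub>R Pa a)) nu = w1*d1/2 * T"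
  proof -
    have "lor ((dw1/2) *\<^sub>R Pv a + (w1/2) *\<^sub>R (d1 *\<^sub>R Pa a)) nu
       = dw1/2 * ((1+a^2)*x + (1-a^2)*y + 2*a*z) + w1*d1/2 * T"
      by (simp add: lor_comp Pv_def Pa_def x_def y_def z_def T_def algebra_simps)
    then show ?thesis using E1 by simp
  qed
  have N: "lor ((dw2/2) *\<^sub>R Qv b + (w2/2) *\<^sub>R (d2 *\<^sub>R Qb b)) nu = - (w2*d2/2 * T)"
  proof -
    have "lor ((dw2/2) *\<^sub>R Qv b + (w2/2) *\<^sub>R (d2 *\<^sub>R Qb b)) nu
       = dw2/2 * (-(1+b^2)*x + (1-b^2)*y - 2*b*z) - w2*d2/2 * (2*b*x + 2*b*y + 2*z)"
      by (simp add: lor_comp Qv_def Qb_def x_def y_def z_def algebra_simps)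
    then show ?thesis using E2 LQ by simp
  qed
  have AA: "lor ((w1/2) *\<^sub>R Pv a) ((w1/2) *\<^sub>R Pv a) = 0"
    by (simp add: lor_comp Pv_def power2_eq_square field_simps)
  have BB: "lor ((w2/2) *\<^sub>R Qv b) ((w2/2) *\<^sub>R Qv b) = 0"
    by (simp add: lor_comp Qv_def power2_eq_square field_simps)
  have AB: "lor ((w1/2) *\<^sub>R Pv a) ((w2/2) *\<^sub>R Qv b) = w1*w2/2 * (1-a*b)^2"
    by (simp add: lor_comp Pv_def Qv_def power2_eq_square field_simps)
  have M: "lor 0 nu = 0" by (simp add: lor_comp)
  have num: "w1*d1/2 * T * - (w2*d2/2 * T) - 0\<^sup>2 = -(w1*w2*d1*d2)"
  proof -
    have "w1*d1/2 * T * - (w2*d2/2 * T) - 0\<^sup>2 = -(w1*w2*d1*d2) * (T^2/4)"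
      by (simp add: power2_eq_square algebra_simps)
    then show ?thesis using T2 by simp
  qed
  have den: "0 * 0 - (w1*w2/2 * (1-a*b)^2)\<^sup>2 = -((w1*w2)*(w1*w2)*(1-a*b)^4/4)"
    by (rule aux1)
  have fin: "-(w1*w2*d1*d2) / (-((w1*w2)*(w1*w2)*(1-a*b)^4/4)) = 4 * d1 * d2 / (w1 * w2 * (1 - a*b)^4)"
    using w nz by (simp add: field_simps)
  show ?thesis unfolding L N AA BB AB M num den fin ..
qed

lemma nu_exists:
  fixes a b w1 w2 :: real
  assumes ab: "a*b \<noteq> 1"
  shows "\<exists>nu. lor nu ((w1/2) *\<^sub>R Pv a) = 0 \<and> lor nu ((w2/2) *\<^sub>R Qv b) = 0 \<and> lor nu nu = 1"
proof -
  define c where "c = 1 / \<bar>1 - a*b\<bar>"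
  have c1: "c * \<bar>1 - a*b\<bar> = 1" using ab by (simp add: c_def)
  have "c * c * ((1 - a*b) * (1 - a*b)) = (c * \<bar>1 - a*b\<bar>) * (c * \<bar>1 - a*b\<bar>)"
    by (simp add: abs_mult_self_eq algebra_simps)
  then have c2: "c * c * ((1 - a*b) * (1 - a*b)) = 1" using c1 by simp
  define nu :: "real^3" where "nu = c *\<^sub>R vector [a+b, a-b, -1-a*b]"
  have "lor nu ((w1/2) *\<^sub>R Pv a) = 0" by (simp add: nu_def lor_comp Pv_def field_simps power2_eq_square)
  moreover have "lor nu ((w2/2) *\<^sub>R Qv b) = 0" by (simp add: nu_def lor_comp Qv_def field_simps power2_eq_square)
  moreover have "lor nu nu = c * c * ((1 - a*b) * (1 - a*b))" by (simp add: nu_def lor_comp algebra_simps)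
  ultimately show ?thesis using c2 by auto
qed

lemma D_pos: fixes a b :: real shows "(1 - a*b)\<^sup>2 + 2 * (a + b)\<^sup>2 > 0"
proof (rule ccontr)
  assume "\<not> ?thesis"
  then have "(1 - a*b)\<^sup>2 = 0" "(a + b)\<^sup>2 = 0"
    by (smt (verit) zero_le_power2)+
  then have "a*b = 1" "b = -a" by auto
  then have "-(a*a) = 1" by simp
  then show False by (smt (verit) zero_le_square)
qed

lemma det3_expand: "det3 x y z = x$1*y$2*z$3 + x$2*y$3*z$1 + x$3*y$1*z$2 - x$1*y$3*z$2 - x$2*y$1*z$3 - x$3*y$2*z$1"
  unfolding det3_def det_3 by simp

lemma lam_alg:
  fixes a b ka kb :: real
  shows "det3 ((ka/2) *\<^sub>R Pv a) ((kb/2) *\<^sub>R Qv b)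
     ((1 / sqrt ((1 - a*b)\<^sup>2 + 2 * (a + b)\<^sup>2)) *\<^sub>R vector [- a - b, a - b, -1 - a*b])
   = (ka * kb / 2 * sqrt ((1 - a*b)\<^sup>2 + 2 * (a + b)\<^sup>2)) * (1 - a*b)"
proof -
  define D where "D = (1 - a*b)\<^sup>2 + 2 * (a + b)\<^sup>2"
  have Dp: "D > 0" unfolding D_def by (rule D_pos)
  define r where "r = 1 / sqrt D"
  have "det3 ((ka/2) *\<^sub>R Pv a) ((kb/2) *\<^sub>R Qv b) (r *\<^sub>R vector [- a - b, a - b, -1 - a*b])
      = r * (ka * kb / 4) * (2 * (1 - a*b) * ((a+b)\<^sup>2 + (a-b)\<^sup>2 + (1+a*b)\<^sup>2))"
    unfolding det3_expand by (simp add: Pv_def Qv_def field_simps power2_eq_square)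
  also have "(a+b)\<^sup>2 + (a-b)\<^sup>2 + (1+a*b)\<^sup>2 = D" unfolding D_def by (simp add: algebra_simps power2_eq_square)
  also have "r * (ka * kb / 4) * (2 * (1 - a*b) * D) = (ka * kb / 2 * (r * D)) * (1 - a*b)"
    by (simp add: algebra_simps)
  also have "r * D = sqrt D" unfolding r_def using Dp by (simp add: real_div_sqrt less_imp_le)
  finally have "det3 ((ka/2) *\<^sub>R Pv a) ((kb/2) *\<^sub>R Qv b) (r *\<^sub>R vector [- a - b, a - b, -1 - a*b]) = (ka * kb / 2 * sqrt D) * (1 - a*b)" .
  then show ?thesis unfolding D_def r_def .
qed

lemma det3_scale1: "det3 (c *\<^sub>R x) y z = c * det3 x y z" unfolding det3_expand by (simp add: algebra_simps)
lemma det3_scale2: "det3 x (c *\<^sub>R y) z = c * det3 x y z" unfolding det3_expand by (simp add: algebra_simps)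
lemma det3_add1: "det3 (x + y) z w = det3 x z w + det3 y z w" unfolding det3_expand by (simp add: algebra_simps)
lemma det3_add2: "det3 x (y + z) w = det3 x y w + det3 x z w" unfolding det3_expand by (simp add: algebra_simps)
lemma det3_neg1: "det3 (- x) y z = - det3 x y z" unfolding det3_expand by (simp add: algebra_simps)
lemma det3_same: "det3 x x z = 0" unfolding det3_expand by (simp add: algebra_simps)

lemma Qv_sing: assumes "a * b = (1::real)" shows "Qv b = (- (b^2)) *\<^sub>R Pv a"
proof -
  have "1 + b^2 = - (b^2) * (-1 - a^2)" "1 - b^2 = - (b^2) * (1 - a^2)" "-2 * b = - (b^2) * (2 * a)"
    using assms by algebra+
  then show ?thesis by (simp add: Qv_def Pv_def vec_eq_iff forall_3)
qed

lemma det_PPa: assumes "a * b = (1::real)"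
  shows "det3 (Pv a) (Pa a) (vector [- a - b, a - b, -1 - a*b]) = -4 * (1 + a^2)^2 * b"
  using assms unfolding det3_expand by (simp add: Pv_def Pa_def) algebra
lemma det_PQb: assumes "a * b = (1::real)"
  shows "det3 (Pv a) (Qb b) (vector [- a - b, a - b, -1 - a*b]) = -4 * (1 + a^2)^2 * b"
  using assms unfolding det3_expand by (simp add: Pv_def Qb_def) algebra

lemma det_identity:
  fixes a b W1 W2 dw1 dw2 d1 d2 p1 p2 r1 r2 :: real
  assumes ab: "a * b = 1"
  shows "a^3 * det3 (p1 *\<^sub>R ((W1/2) *\<^sub>R Pv a) + p2 *\<^sub>R ((W2/2) *\<^sub>R Qv b))
     (r1 *\<^sub>R ((W1/2) *\<^sub>R Pv a) + p1 *\<^sub>R (p1 *\<^sub>R ((dw1/2) *\<^sub>R Pv a + (W1/2) *\<^sub>R (d1 *\<^sub>R Pa a)))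
      + r2 *\<^sub>R ((W2/2) *\<^sub>R Qv b) + p2 *\<^sub>R (p2 *\<^sub>R ((dw2/2) *\<^sub>R Qv b + (W2/2) *\<^sub>R (d2 *\<^sub>R Qb b))))
     (vector [- a - b, a - b, -1 - a*b])
   = - ((1 + a^2)^2 * (p1 * W1 * a^2 - p2 * W2) * (p1^2 * W1 * d1 + p2^2 * W2 * d2))"
proof -
  have "det3 (p1 *\<^sub>R ((W1/2) *\<^sub>R Pv a) + p2 *\<^sub>R ((W2/2) *\<^sub>R Qv b))
     (r1 *\<^sub>R ((W1/2) *\<^sub>R Pv a) + p1 *\<^sub>R (p1 *\<^sub>R ((dw1/2) *\<^sub>R Pv a + (W1/2) *\<^sub>R (d1 *\<^sub>R Pa a)))
      + r2 *\<^sub>R ((W2/2) *\<^sub>R Qv b) + p2 *\<^sub>R (p2 *\<^sub>R ((dw2/2) *\<^sub>R Qv b + (W2/2) *\<^sub>R (d2 *\<^sub>R Qb b))))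
     (vector [- a - b, a - b, -1 - a*b])
   = (p1 * (W1/2) - p2 * (W2/2) * b^2) * (p1 * p1 * (W1/2) * d1 * (-4 * (1 + a^2)^2 * b) + p2 * p2 * (W2/2) * d2 * (-4 * (1 + a^2)^2 * b))"
    unfolding Qv_sing[OF ab] det3_add1 det3_add2 det3_scale1 det3_scale2 det3_same det_PPa[OF ab] det_PQb[OF ab]
    by (simp add: algebra_simps)
  moreover have "a^3 * ((p1 * (W1/2) - p2 * (W2/2) * b^2) * (p1 * p1 * (W1/2) * d1 * (-4 * (1 + a^2)^2 * b) + p2 * p2 * (W2/2) * d2 * (-4 * (1 + a^2)^2 * b)))
     = - ((1 + a^2)^2 * (p1 * W1 * a^2 - p2 * W2) * (p1^2 * W1 * d1 + p2^2 * W2 * d2))"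
    using ab by algebra
  ultimately show ?thesis by simp
qed

lemma det3_scale3: "det3 x y (c *\<^sub>R z) = c * det3 x y z" unfolding det3_expand by (simp add: algebra_simps)

lemma final_sign:
  fixes a b W1 W2 dw1 dw2 d1 d2 p1 p2 r1 r2 e1 e2 D \<kappa> :: real and E1 E2 :: "real^3"
  assumes ab: "a * b = 1" and W: "W1 \<noteq> 0" "W2 \<noteq> 0"
    and ker: "e1 *\<^sub>R ((W1/2) *\<^sub>R Pv a) + e2 *\<^sub>R ((W2/2) *\<^sub>R Qv b) = 0"
    and ori: "p1 * e2 - p2 * e1 > 0"
    and con: "d1 * b * p1 + a * d2 * p2 = 0"
    and E1: "E1 = p1 *\<^sub>R ((W1/2) *\<^sub>R Pv a) + p2 *\<^sub>R ((W2/2) *\<^sub>R Qv b)"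
    and E2: "E2 = r1 *\<^sub>R ((W1/2) *\<^sub>R Pv a) + p1 *\<^sub>R (p1 *\<^sub>R ((dw1/2) *\<^sub>R Pv a + (W1/2) *\<^sub>R (d1 *\<^sub>R Pa a)))
      + r2 *\<^sub>R ((W2/2) *\<^sub>R Qv b) + p2 *\<^sub>R (p2 *\<^sub>R ((dw2/2) *\<^sub>R Qv b + (W2/2) *\<^sub>R (d2 *\<^sub>R Qb b)))"
    and D: "D = (1 - a*b)\<^sup>2 + 2 * (a + b)\<^sup>2"
    and k: "\<kappa> = sgn (- (W1 * W2 / 2 * sqrt D) * (d1 * b * e1 + a * d2 * e2))
                * det3 E1 E2 ((1 / sqrt D) *\<^sub>R vector [- a - b, a - b, -1 - a*b]) / norm E1 ^ 3"
  shows "(\<kappa> > 0 \<longleftrightarrow> W1 * W2 * d1 * d2 > 0) \<and> (\<kappa> < 0 \<longleftrightarrow> W1 * W2 * d1 * d2 < 0)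
         \<and> (\<kappa> = 0 \<longleftrightarrow> d1 = 0 \<or> d2 = 0)"
proof -
  have a0: "a \<noteq> 0" and b0: "b \<noteq> 0" using ab by auto
  have Dp: "D > 0" unfolding D by (rule D_pos)
  define om where "om = p1 * e2 - p2 * e1"
  define \<mu> where "\<mu> = p1 * W1 * a^2 - p2 * W2"
  define S where "S = p1^2 * W1 * d1 + p2^2 * W2 * d2"
  define S1 where "S1 = d1 * b * e1 + a * d2 * e2"
  define X where "X = d1 * W2 + a^4 * W1 * d2"
  have op: "om > 0" using ori om_def by simp
  have kc: "e1 * W1 * a = e2 * W2 * b"
  proof -
    have "(e1 *\<^sub>R ((W1/2) *\<^sub>R Pv a) + e2 *\<^sub>R ((W2/2) *\<^sub>R Qv b))$3 = 0" using ker by simp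
    then show ?thesis by (simp add: Pv_def Qv_def algebra_simps)
  qed
  have rel1: "e1 * \<mu> = W2 * om" unfolding \<mu>_def om_def using kc ab by algebra
  have mu0: "\<mu> \<noteq> 0" using rel1 W op by auto
  have E13: "E1$3 = b * \<mu>" unfolding E1 \<mu>_def using ab by (simp add: Pv_def Qv_def) algebra
  have "E1 \<noteq> 0"
  proof
    assume "E1 = 0"
    then have "E1$3 = 0" by simp
    then show False using E13 b0 mu0 by simp
  qed
  then have nE: "norm E1 > 0" by simp
  have det: "det3 E1 E2 ((1 / sqrt D) *\<^sub>R vector [- a - b, a - b, -1 - a*b]) = - ((1 + a^2)^2 * \<mu> * S) / (sqrt D * a^3)"
  proof -
    have "a^3 * det3 E1 E2 (vector [- a - b, a - b, -1 - a*b]) = - ((1 + a^2)^2 * \<mu> * S)"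
      unfolding E1 E2 \<mu>_def S_def by (rule det_identity[OF ab])
    then show ?thesis unfolding det3_scale3 using a0 Dp by (simp add: field_simps)
  qed
  define P where "P = (1 + a^2)^2 / (sqrt D * norm E1 ^ 3)"
  have "1 + a^2 > (0::real)" by (simp add: add_pos_nonneg)
  then have "(1 + a^2)^2 > (0::real)" by simp
  then have Pp: "P > 0" unfolding P_def using Dp nE by (intro divide_pos_pos mult_pos_pos) auto
  have sg: "sgn (- (W1 * W2 / 2 * sqrt D) * S1) = - sgn (W1 * W2 * S1)"
  proof -
    have "- (W1 * W2 / 2 * sqrt D) * S1 = - ((W1 * W2 * S1) * (sqrt D / 2))" by (simp add: algebra_simps)
    moreover have "sgn (sqrt D / 2) = 1" using Dp by simp
    ultimately show ?thesis by (simp add: sgn_mult)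
  qed
  have kk: "\<kappa> = P * sgn (W1 * W2 * S1) * (\<mu> * S / a^3)"
    unfolding k det sg[unfolded S1_def] P_def S1_def using a0 Dp nE by (simp add: field_simps)
  show ?thesis
  proof (cases "d1 = 0 \<or> d2 = 0")
    case True
    have "S = 0"
    proof (cases "d1 = 0")
      case True
      then have "a * d2 * p2 = 0" using con by simp
      then have "d2 * p2 = 0" using a0 by simp
      then show ?thesis unfolding S_def using True by (auto simp: power2_eq_square)
    next
      case False
      then have "d2 = 0" using \<open>d1 = 0 \<or> d2 = 0\<close> by simp
      then have "d1 * b * p1 = 0" using con by simp
      then have "d1 * p1 = 0" using b0 by simp
      then show ?thesis unfolding S_def using \<open>d2 = 0\<close> by (auto simp: power2_eq_square)
    qed
    then have "\<kappa> = 0" unfolding kk by simp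
    then show ?thesis using True by auto
  next
    case False
    then have d1: "d1 \<noteq> 0" and d2: "d2 \<noteq> 0" by auto
    have p2: "p2 \<noteq> 0"
    proof
      assume "p2 = 0"
      then have "d1 * b * p1 = 0" using con by simp
      then have "p1 = 0" using d1 b0 by simp
      then show False using op \<open>p2 = 0\<close> om_def by simp
    qed
    have dm: "d1 * \<mu> = - p2 * X" unfolding \<mu>_def X_def using con ab by algebra
    have X0: "X \<noteq> 0" using dm d1 mu0 by auto
    have key: "a * d1 * S1 * \<mu> * S = om * p2^2 * d2 * X^2"
      unfolding S1_def \<mu>_def S_def om_def X_def using kc con ab by algebra
    define A where "A = a * S1 * \<mu> * S"
    have "A * (d1 * d2) * d1^2 = (a * d1 * S1 * \<mu> * S) * (d1 * d2) * d1"
      unfolding A_def by (simp add: power2_eq_square algebra_simps)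
    also have "\<dots> = (om * p2^2 * X^2) * ((d1 * d2) * (d1 * d2))" unfolding key by (simp add: algebra_simps)
    finally have eqA: "A * (d1 * d2) * d1^2 = (om * p2^2 * X^2) * ((d1 * d2) * (d1 * d2))" .
    have s1: "(d1 * d2) * (d1 * d2) > 0" using d1 d2 by (metis mult_eq_0_iff not_real_square_gt_zero)
    have s2: "p2^2 > 0" "X^2 > 0" using p2 X0 by simp_all
    have "(om * p2^2 * X^2) * ((d1 * d2) * (d1 * d2)) > 0" by (rule mult_pos_pos[OF mult_pos_pos[OF mult_pos_pos[OF op s2(1)] s2(2)] s1])
    then have "A * (d1 * d2) * d1^2 > 0" by (simp only: eqA)
    then have Ad: "A * (d1 * d2) > 0" using d1 by (simp add: zero_less_mult_iff)
    then have S10: "S1 \<noteq> 0" unfolding A_def by auto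
    define y where "y = W1 * W2 * S1"
    have y0: "y \<noteq> 0" unfolding y_def using W S10 by simp
    have ky: "\<kappa> = P * (W1 * W2 * S1 / \<bar>y\<bar>) * (\<mu> * S / a^3)"
      using kk unfolding y_def by (simp add: real_sgn_eq)
    have ya: "\<bar>y\<bar> \<noteq> 0" using y0 by simp
    have kZ: "\<kappa> * (W1 * W2 * d1 * d2) = (P / \<bar>y\<bar>) * (W1 * W2)^2 * (A * (d1 * d2)) / a^4"
      unfolding ky A_def using ya a0 by (simp add: field_simps power2_eq_square eval_nat_numeral)
    have "\<kappa> * (W1 * W2 * d1 * d2) > 0"
      unfolding kZ using Pp y0 W a0 Ad by (simp add: zero_less_mult_iff)
    then show ?thesis using d1 d2 by (auto simp: zero_less_mult_iff mult_less_0_iff)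
  qed
qed
lemma vd_fst: "(g has_vector_derivative d) (at t) \<Longrightarrow> ((\<lambda>s. fst (g s)) has_real_derivative fst d) (at t)"
proof -
  assume "(g has_vector_derivative d) (at t)"
  then have "((\<lambda>s. fst (g s)) has_derivative (\<lambda>h. fst (h *\<^sub>R d))) (at t)"
    unfolding has_vector_derivative_def by (rule has_derivative_fst)
  moreover have "(\<lambda>h. fst (h *\<^sub>R d)) = (*) (fst d)" by (auto simp: fun_eq_iff)
  ultimately show ?thesis by (simp add: has_field_derivative_def)
qed
lemma vd_snd: "(g has_vector_derivative d) (at t) \<Longrightarrow> ((\<lambda>s. snd (g s)) has_real_derivative snd d) (at t)"
proof -
  assume "(g has_vector_derivative d) (at t)"
  then have "((\<lambda>s. snd (g s)) has_derivative (\<lambda>h. snd (h *\<^sub>R d))) (at t)"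
    unfolding has_vector_derivative_def by (rule has_derivative_snd)
  moreover have "(\<lambda>h. snd (h *\<^sub>R d)) = (*) (snd d)" by (auto simp: fun_eq_iff)
  ultimately show ?thesis by (simp add: has_field_derivative_def)
qed

locale mfs =
  fixes U :: "(real \<times> real) set" and g1 g2 w1 w2 :: "real \<Rightarrow> real"
    and f :: "real \<times> real \<Rightarrow> real^3" and u0 v0 :: real
  assumes oU: "open U"
    and iu: "open (fst ` U)" "is_interval (fst ` U)"
    and iv: "open (snd ` U)" "is_interval (snd ` U)"
    and dg1: "\<And>x. x \<in> fst ` U \<Longrightarrow> (g1 has_real_derivative deriv g1 x) (at x)"
    and dw1: "\<And>x. x \<in> fst ` U \<Longrightarrow> (w1 has_real_derivative deriv w1 x) (at x)"
    and dg2: "\<And>x. x \<in> snd ` U \<Longrightarrow> (g2 has_real_derivative deriv g2 x) (at x)"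
    and dw2: "\<And>x. x \<in> snd ` U \<Longrightarrow> (w2 has_real_derivative deriv w2 x) (at x)"
    and cdg1: "continuous_on (fst ` U) (deriv g1)"
    and cdg2: "continuous_on (snd ` U) (deriv g2)"
    and w1nz: "\<And>x. x \<in> fst ` U \<Longrightarrow> w1 x \<noteq> 0"
    and w2nz: "\<And>x. x \<in> snd ` U \<Longrightarrow> w2 x \<noteq> 0"
    and dense: "U \<subseteq> closure {q\<in>U. g1 (fst q) * g2 (snd q) \<noteq> 1}"
    and base: "(u0, v0) \<in> U"
    and ff: "\<And>u v. (u, v) \<in> U \<Longrightarrow>
           f (u, v) =
             oint u0 u (\<lambda>s. (w1 s / 2) *\<^sub>R vector [-1 - (g1 s)\<^sup>2, 1 - (g1 s)\<^sup>2, 2 * g1 s])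
           + oint v0 v (\<lambda>s. (w2 s / 2) *\<^sub>R vector [1 + (g2 s)\<^sup>2, 1 - (g2 s)\<^sup>2, -2 * g2 s])
           + f (u0, v0)"
begin

definition "Af s = (w1 s / 2) *\<^sub>R Pv (g1 s)"
definition "Bf s = (w2 s / 2) *\<^sub>R Qv (g2 s)"
definition "Af' s = (deriv w1 s / 2) *\<^sub>R Pv (g1 s) + (w1 s / 2) *\<^sub>R (deriv g1 s *\<^sub>R Pa (g1 s))"
definition "Bf' s = (deriv w2 s / 2) *\<^sub>R Qv (g2 s) + (w2 s / 2) *\<^sub>R (deriv g2 s *\<^sub>R Qb (g2 s))"

lemma cont_g1: "continuous_on (fst ` U) g1"
  using dg1 by (meson DERIV_isCont continuous_at_imp_continuous_on)
lemma cont_w1: "continuous_on (fst ` U) w1"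
  using dw1 by (meson DERIV_isCont continuous_at_imp_continuous_on)
lemma cont_g2: "continuous_on (snd ` U) g2"
  using dg2 by (meson DERIV_isCont continuous_at_imp_continuous_on)
lemma cont_w2: "continuous_on (snd ` U) w2"
  using dw2 by (meson DERIV_isCont continuous_at_imp_continuous_on)

lemma cont_Af: "continuous_on (fst ` U) Af"
  unfolding Af_def Pv_poly using cont_g1 cont_w1 by (intro continuous_intros) auto
lemma cont_Bf: "continuous_on (snd ` U) Bf"
  unfolding Bf_def Qv_poly using cont_g2 cont_w2 by (intro continuous_intros) auto

lemma f_eq: "q \<in> U \<Longrightarrow> f q = oint u0 (fst q) Af + oint v0 (snd q) Bf + f (u0, v0)"
proof -
  assume q: "q \<in> U"
  have e1: "Af = (\<lambda>s. (w1 s / 2) *\<^sub>R vector [-1 - (g1 s)\<^sup>2, 1 - (g1 s)\<^sup>2, 2 * g1 s])"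
    by (simp add: fun_eq_iff Af_def Pv_def)
  have e2: "Bf = (\<lambda>s. (w2 s / 2) *\<^sub>R vector [1 + (g2 s)\<^sup>2, 1 - (g2 s)\<^sup>2, -2 * g2 s])"
    by (simp add: fun_eq_iff Bf_def Qv_def)
  show ?thesis unfolding e1 e2 using ff[of "fst q" "snd q"] q by simp
qed

lemma f_deriv:
  assumes q: "q \<in> U"
  shows "(f has_derivative (\<lambda>h. fst h *\<^sub>R Af (fst q) + snd h *\<^sub>R Bf (snd q))) (at q)"
proof -
  have u: "fst q \<in> fst ` U" "u0 \<in> fst ` U" using q base by force+
  have v: "snd q \<in> snd ` U" "v0 \<in> snd ` U" using q base by force+
  have a: "((\<lambda>x. oint u0 x Af) has_vector_derivative Af (fst q)) (at (fst q))"
    by (rule oint_deriv[OF iu u(2) u(1) cont_Af])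
  have b: "((\<lambda>x. oint v0 x Bf) has_vector_derivative Bf (snd q)) (at (snd q))"
    by (rule oint_deriv[OF iv v(2) v(1) cont_Bf])
  have "((\<lambda>x. oint u0 (fst x) Af + oint v0 (snd x) Bf + f (u0, v0)) has_derivative
          (\<lambda>h. fst h *\<^sub>R Af (fst q) + snd h *\<^sub>R Bf (snd q) + 0)) (at q)"
    by (intro has_derivative_add comp_fst_vd[OF a] comp_snd_vd[OF b] has_derivative_const)
  then have "((\<lambda>x. oint u0 (fst x) Af + oint v0 (snd x) Bf + f (u0, v0)) has_derivative
          (\<lambda>h. fst h *\<^sub>R Af (fst q) + snd h *\<^sub>R Bf (snd q))) (at q)" by simp
  then show ?thesis
    by (rule has_derivative_transform_within_open[OF _ oU q]) (simp add: f_eq)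
qed

lemma pdu_f: "q \<in> U \<Longrightarrow> pdu f q = Af (fst q)"
  unfolding pdu_def by (simp add: frechet_derivative_at[OF f_deriv, symmetric])
lemma pdv_f: "q \<in> U \<Longrightarrow> pdv f q = Bf (snd q)"
  unfolding pdv_def by (simp add: frechet_derivative_at[OF f_deriv, symmetric])

lemma Af_deriv: "x \<in> fst ` U \<Longrightarrow> (Af has_vector_derivative Af' x) (at x)"
  unfolding Af_def Af'_def using Pv_deriv[OF dg1 dw1] by blast
lemma Bf_deriv: "x \<in> snd ` U \<Longrightarrow> (Bf has_vector_derivative Bf' x) (at x)"
  unfolding Bf_def Bf'_def using Qv_deriv[OF dg2 dw2] by blast

lemma pdu_f_deriv:
  assumes q: "q \<in> U"
  shows "(pdu f has_derivative (\<lambda>h. fst h *\<^sub>R Af' (fst q))) (at q)"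
proof -
  have u: "fst q \<in> fst ` U" using q by force
  show ?thesis
    by (rule has_derivative_transform_within_open[OF comp_fst_vd[OF Af_deriv[OF u]] oU q]) (simp add: pdu_f)
qed
lemma pdv_f_deriv:
  assumes q: "q \<in> U"
  shows "(pdv f has_derivative (\<lambda>h. snd h *\<^sub>R Bf' (snd q))) (at q)"
proof -
  have v: "snd q \<in> snd ` U" using q by force
  show ?thesis
    by (rule has_derivative_transform_within_open[OF comp_snd_vd[OF Bf_deriv[OF v]] oU q]) (simp add: pdv_f)
qed

lemma pduu: "q \<in> U \<Longrightarrow> pdu (pdu f) q = Af' (fst q)"
  unfolding pdu_def[of "pdu f"] by (simp add: frechet_derivative_at[OF pdu_f_deriv, symmetric])
lemma pduv: "q \<in> U \<Longrightarrow> pdv (pdu f) q = 0"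
  unfolding pdv_def[of "pdu f"] by (simp add: frechet_derivative_at[OF pdu_f_deriv, symmetric])
lemma pdvv: "q \<in> U \<Longrightarrow> pdv (pdv f) q = Bf' (snd q)"
  unfolding pdv_def[of "pdv f"] by (simp add: frechet_derivative_at[OF pdv_f_deriv, symmetric])

lemma gaussK_formula:
  assumes q: "q \<in> U" and ab: "g1 (fst q) * g2 (snd q) \<noteq> 1"
  shows "gaussK f q = 4 * deriv g1 (fst q) * deriv g2 (snd q) / (w1 (fst q) * w2 (snd q) * (1 - g1 (fst q) * g2 (snd q))^4)"
proof -
  have u: "fst q \<in> fst ` U" and v: "snd q \<in> snd ` U" using q by force+
  let ?nu = "SOME nu. lor nu (Af (fst q)) = 0 \<and> lor nu (Bf (snd q)) = 0 \<and> lor nu nu = 1"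
  have "lor ?nu (Af (fst q)) = 0 \<and> lor ?nu (Bf (snd q)) = 0 \<and> lor ?nu ?nu = 1"
    by (rule someI_ex) (use nu_exists[OF ab] in \<open>simp add: Af_def Bf_def\<close>)
  then show ?thesis
    unfolding gaussK_def Let_def pdu_f[OF q] pdv_f[OF q] pduu[OF q] pduv[OF q] pdvv[OF q]
    unfolding Af'_def Bf'_def
    using K_alg[OF ab w1nz[OF u] w2nz[OF v]] unfolding Af_def Bf_def by blast
qed


definition "Dq x = (1 - g1 (fst x) * g2 (snd x))\<^sup>2 + 2 * (g1 (fst x) + g2 (snd x))\<^sup>2"

lemma Dq_pos: "Dq x > 0"
  unfolding Dq_def by (rule D_pos)

lemma lam_eq: "x \<in> U \<Longrightarrow> lam f g1 g2 x = (w1 (fst x) * w2 (snd x) / 2 * sqrt (Dq x)) * (1 - g1 (fst x) * g2 (snd x))"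
  unfolding lam_def pdu_f pdv_f Af_def Bf_def Dq_def enormal_def Let_def
  using lam_alg[where a="g1 (fst x)" and b="g2 (snd x)" and ka="w1 (fst x)" and kb="w2 (snd x)"] by simp

lemma lam_deriv:
  assumes q: "q \<in> U" and s: "g1 (fst q) * g2 (snd q) = 1"
  shows "frechet_derivative (lam f g1 g2) (at q) h =
     - (w1 (fst q) * w2 (snd q) / 2 * sqrt (Dq q)) * (deriv g1 (fst q) * g2 (snd q) * fst h + g1 (fst q) * deriv g2 (snd q) * snd h)"
proof -
  have u: "fst q \<in> fst ` U" and v: "snd q \<in> snd ` U" using q by force+
  note a1 = comp_fst_rd[OF dg1[OF u]] and a2 = comp_snd_rd[OF dg2[OF v]]
  note b1 = comp_fst_rd[OF dw1[OF u]] and b2 = comp_snd_rd[OF dw2[OF v]]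
  define H where "H x = w1 (fst x) * w2 (snd x) / 2 * sqrt (Dq x)" for x
  have dD: "Dq differentiable (at q)"
    unfolding Dq_def[abs_def] using a1 a2 by (intro derivative_intros differentiableI) auto
  have ds: "sqrt differentiable (at (Dq q))"
    using DERIV_real_sqrt[OF Dq_pos[of q]] by (auto simp: has_field_derivative_def intro: differentiableI)
  have "H = (\<lambda>x. w1 (fst x) * (w2 (snd x) * (sqrt (Dq x) * (1/2))))"
    by (simp add: H_def fun_eq_iff)
  moreover have "(\<lambda>x. w1 (fst x) * (w2 (snd x) * (sqrt (Dq x) * (1/2)))) differentiable (at q)"
    by (intro differentiable_mult differentiableI[OF b1] differentiableI[OF b2]
        differentiable_compose[OF ds dD] differentiable_const)
  ultimately have "H differentiable (at q)" by simp
  then obtain H' where hH: "(H has_derivative H') (at q)" by (auto simp: differentiable_def)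
  have hG: "((\<lambda>x. 1 - g1 (fst x) * g2 (snd x)) has_derivative
      (\<lambda>h. 0 - (g1 (fst q) * (snd h * deriv g2 (snd q)) + fst h * deriv g1 (fst q) * g2 (snd q)))) (at q)"
    by (rule has_derivative_diff[OF has_derivative_const has_derivative_mult[OF a1 a2]])
  have "((\<lambda>x. H x * (1 - g1 (fst x) * g2 (snd x))) has_derivative
     (\<lambda>h. H q * (0 - (g1 (fst q) * (snd h * deriv g2 (snd q)) + fst h * deriv g1 (fst q) * g2 (snd q)))
         + H' h * (1 - g1 (fst q) * g2 (snd q)))) (at q)"
    by (rule has_derivative_mult[OF hH hG])
  then have "(lam f g1 g2 has_derivative
     (\<lambda>h. H q * (0 - (g1 (fst q) * (snd h * deriv g2 (snd q)) + fst h * deriv g1 (fst q) * g2 (snd q)))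
         + H' h * (1 - g1 (fst q) * g2 (snd q)))) (at q)"
    by (rule has_derivative_transform_within_open[OF _ oU q]) (simp add: lam_eq H_def)
  from frechet_derivative_at[OF this, symmetric] show ?thesis
    using s by (simp add: H_def algebra_simps)
qed

lemma gh_vd:
  assumes q: "\<gamma> s \<in> U" and d: "(\<gamma> has_vector_derivative V) (at s)"
  shows "((f \<circ> \<gamma>) has_vector_derivative (fst V *\<^sub>R Af (fst (\<gamma> s)) + snd V *\<^sub>R Bf (snd (\<gamma> s)))) (at s)"
proof -
  have "((f \<circ> \<gamma>) has_derivative ((\<lambda>h. fst h *\<^sub>R Af (fst (\<gamma> s)) + snd h *\<^sub>R Bf (snd (\<gamma> s))) \<circ> (\<lambda>h. h *\<^sub>R V))) (at s)"
    by (rule diff_chain_at[OF d[unfolded has_vector_derivative_def] f_deriv[OF q]])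
  moreover have "((\<lambda>h. fst h *\<^sub>R Af (fst (\<gamma> s)) + snd h *\<^sub>R Bf (snd (\<gamma> s))) \<circ> (\<lambda>h. h *\<^sub>R V))
     = (\<lambda>h. h *\<^sub>R (fst V *\<^sub>R Af (fst (\<gamma> s)) + snd V *\<^sub>R Bf (snd (\<gamma> s))))"
    by (simp add: fun_eq_iff o_def scaleR_add_right)
  ultimately show ?thesis unfolding has_vector_derivative_def by simp
qed

lemma gh_vd2:
  assumes I: "open I" "t \<in> I" and inU: "\<And>s. s \<in> I \<Longrightarrow> \<gamma> s \<in> U"
    and d1: "\<And>s. s \<in> I \<Longrightarrow> (\<gamma> has_vector_derivative \<gamma>' s) (at s)"
    and d2: "(\<gamma>' has_vector_derivative V2) (at t)"
  shows "((\<lambda>s. vector_derivative (f \<circ> \<gamma>) (at s)) has_vector_derivative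
     (fst V2 *\<^sub>R Af (fst (\<gamma> t)) + fst (\<gamma>' t) *\<^sub>R (fst (\<gamma>' t) *\<^sub>R Af' (fst (\<gamma> t)))
      + snd V2 *\<^sub>R Bf (snd (\<gamma> t)) + snd (\<gamma>' t) *\<^sub>R (snd (\<gamma>' t) *\<^sub>R Bf' (snd (\<gamma> t))))) (at t)"
proof -
  define E where "E s = fst (\<gamma>' s) *\<^sub>R Af (fst (\<gamma> s)) + snd (\<gamma>' s) *\<^sub>R Bf (snd (\<gamma> s))" for s
  have eqE: "vector_derivative (f \<circ> \<gamma>) (at s) = E s" if "s \<in> I" for s
    unfolding E_def using gh_vd[OF inU[OF that] d1[OF that]] by (rule vector_derivative_at)
  have tU: "\<gamma> t \<in> U" using inU I by blast
  have u: "fst (\<gamma> t) \<in> fst ` U" and v: "snd (\<gamma> t) \<in> snd ` U" using tU by force+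
  have a1: "((\<lambda>s. fst (\<gamma>' s)) has_real_derivative fst V2) (at t)" by (rule vd_fst[OF d2])
  have a2: "((\<lambda>s. snd (\<gamma>' s)) has_real_derivative snd V2) (at t)" by (rule vd_snd[OF d2])
  have c1: "((\<lambda>s. fst (\<gamma> s)) has_vector_derivative fst (\<gamma>' t)) (at t)"
    using vd_fst[OF d1[OF I(2)]] by (simp add: has_real_derivative_iff_has_vector_derivative)
  have c2: "((\<lambda>s. snd (\<gamma> s)) has_vector_derivative snd (\<gamma>' t)) (at t)"
    using vd_snd[OF d1[OF I(2)]] by (simp add: has_real_derivative_iff_has_vector_derivative)
  have e1: "((\<lambda>s. Af (fst (\<gamma> s))) has_vector_derivative fst (\<gamma>' t) *\<^sub>R Af' (fst (\<gamma> t))) (at t)"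
    using vector_diff_chain_at[OF c1 Af_deriv[OF u]] by (simp add: o_def)
  have e2: "((\<lambda>s. Bf (snd (\<gamma> s))) has_vector_derivative snd (\<gamma>' t) *\<^sub>R Bf' (snd (\<gamma> t))) (at t)"
    using vector_diff_chain_at[OF c2 Bf_deriv[OF v]] by (simp add: o_def)
  have "(E has_vector_derivative
     ((fst (\<gamma>' t) *\<^sub>R (fst (\<gamma>' t) *\<^sub>R Af' (fst (\<gamma> t))) + fst V2 *\<^sub>R Af (fst (\<gamma> t)))
     + (snd (\<gamma>' t) *\<^sub>R (snd (\<gamma>' t) *\<^sub>R Bf' (snd (\<gamma> t))) + snd V2 *\<^sub>R Bf (snd (\<gamma> t))))) (at t)"
    unfolding E_def[abs_def]
    by (rule has_vector_derivative_add[OF has_vector_derivative_scaleR[OF a1 e1] has_vector_derivative_scaleR[OF a2 e2]])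
  then have "(E has_vector_derivative
     (fst V2 *\<^sub>R Af (fst (\<gamma> t)) + fst (\<gamma>' t) *\<^sub>R (fst (\<gamma>' t) *\<^sub>R Af' (fst (\<gamma> t)))
      + snd V2 *\<^sub>R Bf (snd (\<gamma> t)) + snd (\<gamma>' t) *\<^sub>R (snd (\<gamma>' t) *\<^sub>R Bf' (snd (\<gamma> t))))) (at t)"
    by (rule has_vector_derivative_eq_rhs) (simp add: algebra_simps)
  then show ?thesis
    by (rule has_vector_derivative_transform_within_open[OF _ I]) (simp add: eqE)
qed

lemma Kzero_u:
  assumes q0: "q0 \<in> U" and s0: "g1 (fst q0) * g2 (snd q0) = 1" and d: "deriv g1 (fst q0) = 0"
    and e: "e > 0"
  shows "\<exists>q. q \<in> U \<and> g1 (fst q) * g2 (snd q) \<noteq> 1 \<and> q \<noteq> q0 \<and> dist q q0 < e \<and> gaussK f q = 0"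
proof -
  obtain e0 where e0: "e0 > 0" "ball q0 e0 \<subseteq> U" using oU q0 open_contains_ball by blast
  define e' where "e' = min e e0"
  have e': "e' > 0" "e' \<le> e" "ball q0 e' \<subseteq> U" using e e0 by (auto simp: e'_def)
  show ?thesis
  proof (cases "\<exists>v. \<bar>v - snd q0\<bar> < e' \<and> g1 (fst q0) * g2 v \<noteq> 1")
    case True
    then obtain v where v: "\<bar>v - snd q0\<bar> < e'" "g1 (fst q0) * g2 v \<noteq> 1" by blast
    define q where "q = (fst q0, v)"
    have dq: "dist q q0 = \<bar>v - snd q0\<bar>"
      unfolding q_def by (cases q0) (simp add: dist_Pair_Pair dist_real_def)
    have qU: "q \<in> U" using e'(3) v(1) dq by (auto simp: dist_commute)
    have "q \<noteq> q0"
    proof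
      assume "q = q0"
      then have "snd q = snd q0" by simp
      then have "v = snd q0" unfolding q_def by simp
      then show False using v(2) s0 by simp
    qed
    moreover have "gaussK f q = 0"
      using gaussK_formula[OF qU] v(2) d by (simp add: q_def)
    moreover have "g1 (fst q) * g2 (snd q) \<noteq> 1" using v(2) by (simp add: q_def)
    moreover have "dist q q0 < e" using dq v(1) e'(2) by linarith
    ultimately show ?thesis using qU by (intro exI[of _ q] conjI) assumption+
  next
    case False
    then have const: "g1 (fst q0) * g2 v = 1" if "\<bar>v - snd q0\<bar> < e'" for v using that by blast
    have g10: "g1 (fst q0) \<noteq> 0" using s0 by auto
    have gv: "g2 v = g2 (snd q0)" if "\<bar>v - snd q0\<bar> < e'" for v
    proof -
      have "g1 (fst q0) * g2 v = g1 (fst q0) * g2 (snd q0)" using const[OF that] s0 by simp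
      then show ?thesis using g10 by simp
    qed
    have dz: "deriv g2 v = 0" if "\<bar>v - snd q0\<bar> < e'" for v
    proof -
      have "dist (fst q0, v) q0 = \<bar>v - snd q0\<bar>" by (cases q0) (simp add: dist_Pair_Pair dist_real_def)
      then have "(fst q0, v) \<in> ball q0 e'" using that by (simp add: dist_commute)
      then have "(fst q0, v) \<in> U" using e'(3) by blast
      then have vU: "v \<in> snd ` U" by force
      have h0: "((\<lambda>x. g2 (snd q0)) has_real_derivative 0) (at v)" by simp
      have hv: "v \<in> ball (snd q0) e'" using that by (simp add: dist_real_def abs_minus_commute)
      have heq: "g2 (snd q0) = g2 y" if "y \<in> ball (snd q0) e'" for y
      proof -
        have "\<bar>y - snd q0\<bar> < e'" using that by (simp add: dist_real_def abs_minus_commute)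
        from gv[OF this] show ?thesis by simp
      qed
      have "(g2 has_real_derivative 0) (at v)"
        by (rule has_field_derivative_transform_within_open[OF h0 open_ball hv heq])
      then show ?thesis using dg2[OF vU] DERIV_unique by blast
    qed
    have "q0 \<in> closure {q\<in>U. g1 (fst q) * g2 (snd q) \<noteq> 1}" using dense q0 by blast
    then obtain q where q: "q \<in> {q\<in>U. g1 (fst q) * g2 (snd q) \<noteq> 1}" "dist q q0 < e'"
      using e'(1) closure_approachable by blast
    have "\<bar>snd q - snd q0\<bar> < e'" using dist_snd_le[of q q0] q(2) by (simp add: dist_real_def)
    then have "deriv g2 (snd q) = 0" by (rule dz)
    then have "gaussK f q = 0" using gaussK_formula q(1) by simp
    moreover have "q \<noteq> q0" using q(1) s0 by auto
    moreover have "dist q q0 < e" using q(2) e'(2) by linarith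
    moreover have "q \<in> U" "g1 (fst q) * g2 (snd q) \<noteq> 1" using q(1) by auto
    ultimately show ?thesis by (intro exI[of _ q] conjI) assumption+
  qed
qed

lemma Kzero_v:
  assumes q0: "q0 \<in> U" and s0: "g1 (fst q0) * g2 (snd q0) = 1" and d: "deriv g2 (snd q0) = 0"
    and e: "e > 0"
  shows "\<exists>q. q \<in> U \<and> g1 (fst q) * g2 (snd q) \<noteq> 1 \<and> q \<noteq> q0 \<and> dist q q0 < e \<and> gaussK f q = 0"
proof -
  obtain e0 where e0: "e0 > 0" "ball q0 e0 \<subseteq> U" using oU q0 open_contains_ball by blast
  define e' where "e' = min e e0"
  have e': "e' > 0" "e' \<le> e" "ball q0 e' \<subseteq> U" using e e0 by (auto simp: e'_def)
  show ?thesis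
  proof (cases "\<exists>u. \<bar>u - fst q0\<bar> < e' \<and> g1 u * g2 (snd q0) \<noteq> 1")
    case True
    then obtain u where u: "\<bar>u - fst q0\<bar> < e'" "g1 u * g2 (snd q0) \<noteq> 1" by blast
    define q where "q = (u, snd q0)"
    have dq: "dist q q0 = \<bar>u - fst q0\<bar>"
      unfolding q_def by (cases q0) (simp add: dist_Pair_Pair dist_real_def)
    have qU: "q \<in> U" using e'(3) u(1) dq by (auto simp: dist_commute)
    have "q \<noteq> q0"
    proof
      assume "q = q0"
      then have "fst q = fst q0" by simp
      then have "u = fst q0" unfolding q_def by simp
      then show False using u(2) s0 by simp
    qed
    moreover have "gaussK f q = 0"
      using gaussK_formula[OF qU] u(2) d by (simp add: q_def)
    moreover have "g1 (fst q) * g2 (snd q) \<noteq> 1" using u(2) by (simp add: q_def)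
    moreover have "dist q q0 < e" using dq u(1) e'(2) by linarith
    ultimately show ?thesis using qU by (intro exI[of _ q] conjI) assumption+
  next
    case False
    then have const: "g1 u * g2 (snd q0) = 1" if "\<bar>u - fst q0\<bar> < e'" for u using that by blast
    have g20: "g2 (snd q0) \<noteq> 0" using s0 by auto
    have gu: "g1 u = g1 (fst q0)" if "\<bar>u - fst q0\<bar> < e'" for u
    proof -
      have "g1 u * g2 (snd q0) = g1 (fst q0) * g2 (snd q0)" using const[OF that] s0 by simp
      then show ?thesis using g20 by simp
    qed
    have dz: "deriv g1 u = 0" if "\<bar>u - fst q0\<bar> < e'" for u
    proof -
      have "dist (u, snd q0) q0 = \<bar>u - fst q0\<bar>" by (cases q0) (simp add: dist_Pair_Pair dist_real_def)
      then have "(u, snd q0) \<in> ball q0 e'" using that by (simp add: dist_commute)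
      then have "(u, snd q0) \<in> U" using e'(3) by blast
      then have uU: "u \<in> fst ` U" by force
      have h0: "((\<lambda>x. g1 (fst q0)) has_real_derivative 0) (at u)" by simp
      have hv: "u \<in> ball (fst q0) e'" using that by (simp add: dist_real_def abs_minus_commute)
      have heq: "g1 (fst q0) = g1 y" if "y \<in> ball (fst q0) e'" for y
      proof -
        have "\<bar>y - fst q0\<bar> < e'" using that by (simp add: dist_real_def abs_minus_commute)
        from gu[OF this] show ?thesis by simp
      qed
      have "(g1 has_real_derivative 0) (at u)"
        by (rule has_field_derivative_transform_within_open[OF h0 open_ball hv heq])
      then show ?thesis using dg1[OF uU] DERIV_unique by blast
    qed
    have "q0 \<in> closure {q\<in>U. g1 (fst q) * g2 (snd q) \<noteq> 1}" using dense q0 by blast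
    then obtain q where q: "q \<in> {q\<in>U. g1 (fst q) * g2 (snd q) \<noteq> 1}" "dist q q0 < e'"
      using e'(1) closure_approachable by blast
    have "\<bar>fst q - fst q0\<bar> < e'" using dist_fst_le[of q q0] q(2) by (simp add: dist_real_def)
    then have "deriv g1 (fst q) = 0" by (rule dz)
    then have "gaussK f q = 0" using gaussK_formula q(1) by simp
    moreover have "q \<noteq> q0" using q(1) s0 by auto
    moreover have "dist q q0 < e" using q(2) e'(2) by linarith
    moreover have "q \<in> U" "g1 (fst q) * g2 (snd q) \<noteq> 1" using q(1) by auto
    ultimately show ?thesis by (intro exI[of _ q] conjI) assumption+
  qed
qed

definition "Zf q = w1 (fst q) * w2 (snd q) * deriv g1 (fst q) * deriv g2 (snd q)"

lemma Zf_cont: "q0 \<in> U \<Longrightarrow> isCont Zf q0"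
proof -
  assume q0: "q0 \<in> U"
  have c1: "continuous_on U (\<lambda>q. h (fst q))" if "continuous_on (fst ` U) h" for h :: "real \<Rightarrow> real"
    by (rule continuous_on_compose2[OF that continuous_on_fst[OF continuous_on_id]]) auto
  have c2: "continuous_on U (\<lambda>q. h (snd q))" if "continuous_on (snd ` U) h" for h :: "real \<Rightarrow> real"
    by (rule continuous_on_compose2[OF that continuous_on_snd[OF continuous_on_id]]) auto
  have "continuous_on U Zf"
    unfolding Zf_def[abs_def]
    by (intro continuous_intros c1 c2 cont_w1 cont_w2 cdg1 cdg2)
  then show ?thesis using oU q0 continuous_on_eq_continuous_at by blast
qed

lemma K_near:
  assumes q0: "q0 \<in> U" and pos: "Zf q0 > 0 \<or> Zf q0 < 0"
  shows "eventually (\<lambda>q. if Zf q0 > 0 then gaussK f q > 0 else gaussK f q < 0) (at q0 within (U - sing_set U g1 g2))"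
proof -
  have t: "(Zf \<longlongrightarrow> Zf q0) (at q0)" using Zf_cont[OF q0] isCont_def by blast
  have ev: "eventually (\<lambda>q. if Zf q0 > 0 then Zf q > 0 else Zf q < 0) (at q0)"
    using pos order_tendstoD[OF t] by auto
  then obtain d where d: "d > 0" "\<And>x. x \<noteq> q0 \<and> dist x q0 < d \<longrightarrow> (if Zf q0 > 0 then Zf x > 0 else Zf x < 0)"
    unfolding eventually_at by auto
  show ?thesis unfolding eventually_at
  proof (intro exI[of _ d] conjI ballI impI)
    show "d > 0" by fact
    fix x assume x: "x \<in> U - sing_set U g1 g2" "x \<noteq> q0 \<and> dist x q0 < d"
    have xU: "x \<in> U" and ns: "g1 (fst x) * g2 (snd x) \<noteq> 1" using x(1) by (auto simp: sing_set_def)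
    have K: "gaussK f x = 4 * (w1 (fst x) * w2 (snd x) * deriv g1 (fst x) * deriv g2 (snd x)) / ((w1 (fst x) * w2 (snd x))^2 * (1 - g1 (fst x) * g2 (snd x))^4)"
    proof -
      have u: "fst x \<in> fst ` U" and v: "snd x \<in> snd ` U" using xU by force+
      show ?thesis unfolding gaussK_formula[OF xU ns] using w1nz[OF u] w2nz[OF v]
        by (simp add: field_simps power2_eq_square)
    qed
    have den: "(w1 (fst x) * w2 (snd x))^2 * (1 - g1 (fst x) * g2 (snd x))^4 > 0"
    proof -
      have u: "fst x \<in> fst ` U" and v: "snd x \<in> snd ` U" using xU by force+
      have "w1 (fst x) * w2 (snd x) \<noteq> 0" using w1nz[OF u] w2nz[OF v] by simp
      moreover have "1 - g1 (fst x) * g2 (snd x) \<noteq> 0" using ns by simp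
      ultimately show ?thesis by (simp add: zero_less_mult_iff)
    qed
    have "if Zf q0 > 0 then Zf x > 0 else Zf x < 0" using d(2) x(2) by blast
    then show "if Zf q0 > 0 then gaussK f x > 0 else gaussK f x < 0"
      unfolding K using den by (auto simp: Zf_def divide_pos_pos divide_neg_pos)
  qed
qed
end

theorem theorem4p8:
  fixes U :: "(real \<times> real) set"
    and g1 g2 w1 w2 :: "real \<Rightarrow> real"
    and f :: "real \<times> real \<Rightarrow> real^3"
    and I :: "real set"
    and \<gamma> \<eta> :: "real \<Rightarrow> real \<times> real"
  assumes mf: "minface_real_W U g1 g2 w1 w2 f"
    and I: "open I" "is_interval I" "0 \<in> I"
    and \<gamma>_smooth: "smooth_on I \<gamma>"
    and \<gamma>_reg: "\<forall>t\<in>I. vector_derivative \<gamma> (at t) \<noteq> 0"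
    and \<gamma>_param: "\<exists>V. open V \<and> \<gamma> ` I \<subseteq> V \<and> V \<subseteq> U \<and> sing_set U g1 g2 \<inter> V = \<gamma> ` I"
    and cusp: "\<forall>t\<in>I. cuspidal_edge U f (\<gamma> t)"
    and \<eta>_null: "\<forall>t\<in>I. \<eta> t \<noteq> 0 \<and> frechet_derivative f (at (\<gamma> t)) (\<eta> t) = 0"
    and \<eta>_orient: "\<forall>t\<in>I. fst (vector_derivative \<gamma> (at t)) * snd (\<eta> t)
                        - snd (vector_derivative \<gamma> (at t)) * fst (\<eta> t) > 0"
  shows "\<forall>t\<in>I.
           (sing_curv f g1 g2 \<gamma> \<eta> t > 0 \<longleftrightarrow>
              (\<forall>\<^sub>F q in at (\<gamma> t) within (U - sing_set U g1 g2). gaussK f q > 0)) \<and>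
           (sing_curv f g1 g2 \<gamma> \<eta> t < 0 \<longleftrightarrow>
              (\<forall>\<^sub>F q in at (\<gamma> t) within (U - sing_set U g1 g2). gaussK f q < 0)) \<and>
           (sing_curv f g1 g2 \<gamma> \<eta> t = 0 \<longleftrightarrow>
              deriv g1 (fst (\<gamma> t)) = 0 \<or> deriv g2 (snd (\<gamma> t)) = 0)"
proof -
  have oU: "open U" and cU: "connected U" using mf unfolding minface_real_W_def by auto
  have sm: "smooth_on (fst ` U) g1" "smooth_on (snd ` U) g2" "smooth_on (fst ` U) w1" "smooth_on (snd ` U) w2"
    using mf unfolding minface_real_W_def by auto
  have nz: "\<And>u. u \<in> fst ` U \<Longrightarrow> w1 u \<noteq> 0" "\<And>v. v \<in> snd ` U \<Longrightarrow> w2 v \<noteq> 0"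
    using mf unfolding minface_real_W_def by auto
  have dense: "U \<subseteq> closure {q\<in>U. g1 (fst q) * g2 (snd q) \<noteq> 1}"
    using mf unfolding minface_real_W_def by auto
  obtain u0 v0 where base: "(u0, v0) \<in> U" and ff: "\<And>u v. (u, v) \<in> U \<Longrightarrow>
           f (u, v) =
             oint u0 u (\<lambda>s. (w1 s / 2) *\<^sub>R vector [-1 - (g1 s)\<^sup>2, 1 - (g1 s)\<^sup>2, 2 * g1 s])
           + oint v0 v (\<lambda>s. (w2 s / 2) *\<^sub>R vector [1 + (g2 s)\<^sup>2, 1 - (g2 s)\<^sup>2, -2 * g2 s])
           + f (u0, v0)"
    using mf unfolding minface_real_W_def by blast
  have ou: "open (fst ` U)" using open_image_fst[OF oU] .
  have ov: "open (snd ` U)" using open_image_snd[OF oU] .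
  have iu: "is_interval (fst ` U)" unfolding is_interval_connected_1
    by (rule connected_continuous_image[OF continuous_on_fst[OF continuous_on_id] cU])
  have iv: "is_interval (snd ` U)" unfolding is_interval_connected_1
    by (rule connected_continuous_image[OF continuous_on_snd[OF continuous_on_id] cU])
  interpret M: mfs U g1 g2 w1 w2 f u0 v0
  proof
    show "open U" "open (fst ` U)" "is_interval (fst ` U)" "open (snd ` U)" "is_interval (snd ` U)"
      by fact+
    show "\<And>x. x \<in> fst ` U \<Longrightarrow> (g1 has_real_derivative deriv g1 x) (at x)"
      using smooth_real(1)[OF sm(1) ou] by blast
    show "\<And>x. x \<in> fst ` U \<Longrightarrow> (w1 has_real_derivative deriv w1 x) (at x)"
      using smooth_real(1)[OF sm(3) ou] by blast
    show "\<And>x. x \<in> snd ` U \<Longrightarrow> (g2 has_real_derivative deriv g2 x) (at x)"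
      using smooth_real(1)[OF sm(2) ov] by blast
    show "\<And>x. x \<in> snd ` U \<Longrightarrow> (w2 has_real_derivative deriv w2 x) (at x)"
      using smooth_real(1)[OF sm(4) ov] by blast
    show "continuous_on (fst ` U) (deriv g1)" using smooth_real(2)[OF sm(1) ou] .
    show "continuous_on (snd ` U) (deriv g2)" using smooth_real(2)[OF sm(2) ov] .
    show "\<And>x. x \<in> fst ` U \<Longrightarrow> w1 x \<noteq> 0" "\<And>x. x \<in> snd ` U \<Longrightarrow> w2 x \<noteq> 0" by (fact nz)+
    show "U \<subseteq> closure {q\<in>U. g1 (fst q) * g2 (snd q) \<noteq> 1}" by fact
    show "(u0, v0) \<in> U" by fact
    show "\<And>u v. (u, v) \<in> U \<Longrightarrow>
           f (u, v) =
             oint u0 u (\<lambda>s. (w1 s / 2) *\<^sub>R vector [-1 - (g1 s)\<^sup>2, 1 - (g1 s)\<^sup>2, 2 * g1 s])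
           + oint v0 v (\<lambda>s. (w2 s / 2) *\<^sub>R vector [1 + (g2 s)\<^sup>2, 1 - (g2 s)\<^sup>2, -2 * g2 s])
           + f (u0, v0)" by (fact ff)
  qed
  obtain V where V: "\<gamma> ` I \<subseteq> V" "V \<subseteq> U" "sing_set U g1 g2 \<inter> V = \<gamma> ` I" using \<gamma>_param by blast
  have inU: "\<gamma> s \<in> U" if "s \<in> I" for s using V that by blast
  have sing: "g1 (fst (\<gamma> s)) * g2 (snd (\<gamma> s)) = 1" if "s \<in> I" for s
  proof -
    have "\<gamma> s \<in> sing_set U g1 g2" using V that by blast
    then show ?thesis by (simp add: sing_set_def)
  qed
  define gd where "gd s = vector_derivative \<gamma> (at s)" for s
  have dg: "(\<gamma> has_vector_derivative gd s) (at s)" if "s \<in> I" for s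
    unfolding gd_def using smooth_curve(1)[OF \<gamma>_smooth I(1) that] .
  show ?thesis
  proof
    fix t assume t: "t \<in> I"
    define gdd where "gdd = vector_derivative gd (at t)"
    have dgg: "(gd has_vector_derivative gdd) (at t)"
      unfolding gdd_def gd_def using smooth_curve(2)[OF \<gamma>_smooth I(1) t] .
    define q0 where "q0 = \<gamma> t"
    have q0U: "q0 \<in> U" unfolding q0_def using inU[OF t] .
    have s0: "g1 (fst q0) * g2 (snd q0) = 1" unfolding q0_def using sing[OF t] .
    have u: "fst q0 \<in> fst ` U" and v: "snd q0 \<in> snd ` U" using q0U by force+
    have con: "deriv g1 (fst q0) * g2 (snd q0) * fst (gd t) + g1 (fst q0) * deriv g2 (snd q0) * snd (gd t) = 0"
    proof -
      have "((\<lambda>s. g1 (fst (\<gamma> s)) * g2 (snd (\<gamma> s))) has_real_derivative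
          deriv g1 (fst (\<gamma> t)) * fst (gd t) * g2 (snd (\<gamma> t)) + deriv g2 (snd (\<gamma> t)) * snd (gd t) * g1 (fst (\<gamma> t))) (at t)"
        by (rule DERIV_mult[OF DERIV_chain2[OF M.dg1 vd_fst[OF dg[OF t]]] DERIV_chain2[OF M.dg2 vd_snd[OF dg[OF t]]]])
           (use u v in \<open>simp_all add: q0_def\<close>)
      moreover have "((\<lambda>s. g1 (fst (\<gamma> s)) * g2 (snd (\<gamma> s))) has_real_derivative 0) (at t)"
        by (rule has_field_derivative_transform_within_open[OF DERIV_const I(1) t]) (simp add: sing)
      ultimately have "deriv g1 (fst (\<gamma> t)) * fst (gd t) * g2 (snd (\<gamma> t)) + deriv g2 (snd (\<gamma> t)) * snd (gd t) * g1 (fst (\<gamma> t)) = 0"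
        using DERIV_unique by blast
      then show ?thesis unfolding q0_def by (simp add: algebra_simps)
    qed
    have ker: "fst (\<eta> t) *\<^sub>R ((w1 (fst q0) / 2) *\<^sub>R Pv (g1 (fst q0))) + snd (\<eta> t) *\<^sub>R ((w2 (snd q0) / 2) *\<^sub>R Qv (g2 (snd q0))) = 0"
    proof -
      have "frechet_derivative f (at q0) (\<eta> t) = 0" using \<eta>_null t unfolding q0_def by blast
      then show ?thesis unfolding frechet_derivative_at[OF M.f_deriv[OF q0U], symmetric] M.Af_def M.Bf_def by simp
    qed
    have ori: "fst (gd t) * snd (\<eta> t) - snd (gd t) * fst (\<eta> t) > 0" using \<eta>_orient t unfolding gd_def by blast
    have vd1: "vector_derivative (f \<circ> \<gamma>) (at t) = fst (gd t) *\<^sub>R M.Af (fst q0) + snd (gd t) *\<^sub>R M.Bf (snd q0)"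
      unfolding q0_def by (rule vector_derivative_at[OF M.gh_vd[OF inU[OF t] dg[OF t]]])
    have vd2: "vector_derivative (\<lambda>s. vector_derivative (f \<circ> \<gamma>) (at s)) (at t) =
       fst gdd *\<^sub>R M.Af (fst q0) + fst (gd t) *\<^sub>R (fst (gd t) *\<^sub>R M.Af' (fst q0))
      + snd gdd *\<^sub>R M.Bf (snd q0) + snd (gd t) *\<^sub>R (snd (gd t) *\<^sub>R M.Bf' (snd q0))"
      unfolding q0_def by (rule vector_derivative_at[OF M.gh_vd2[OF I(1) t inU dg dgg]])
    have ld: "frechet_derivative (lam f g1 g2) (at q0) (\<eta> t) =
     - (w1 (fst q0) * w2 (snd q0) / 2 * sqrt (M.Dq q0)) * (deriv g1 (fst q0) * g2 (snd q0) * fst (\<eta> t) + g1 (fst q0) * deriv g2 (snd q0) * snd (\<eta> t))"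
      by (rule M.lam_deriv[OF q0U s0])
    have en: "enormal g1 g2 q0 = (1 / sqrt (M.Dq q0)) *\<^sub>R vector [- g1 (fst q0) - g2 (snd q0), g1 (fst q0) - g2 (snd q0), -1 - g1 (fst q0) * g2 (snd q0)]"
      by (simp add: enormal_def M.Dq_def Let_def)
    define \<kappa> where "\<kappa> = sing_curv f g1 g2 \<gamma> \<eta> t"
    have kap: "\<kappa> = sgn (- (w1 (fst q0) * w2 (snd q0) / 2 * sqrt (M.Dq q0)) * (deriv g1 (fst q0) * g2 (snd q0) * fst (\<eta> t) + g1 (fst q0) * deriv g2 (snd q0) * snd (\<eta> t)))
       * det3 (fst (gd t) *\<^sub>R M.Af (fst q0) + snd (gd t) *\<^sub>R M.Bf (snd q0))
         (fst gdd *\<^sub>R M.Af (fst q0) + fst (gd t) *\<^sub>R (fst (gd t) *\<^sub>R M.Af' (fst q0))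
      + snd gdd *\<^sub>R M.Bf (snd q0) + snd (gd t) *\<^sub>R (snd (gd t) *\<^sub>R M.Bf' (snd q0)))
         ((1 / sqrt (M.Dq q0)) *\<^sub>R vector [- g1 (fst q0) - g2 (snd q0), g1 (fst q0) - g2 (snd q0), -1 - g1 (fst q0) * g2 (snd q0)])
       / norm (fst (gd t) *\<^sub>R M.Af (fst q0) + snd (gd t) *\<^sub>R M.Bf (snd q0)) ^ 3"
      unfolding \<kappa>_def sing_curv_def Let_def vd1 vd2 q0_def[symmetric] by (simp only: ld en)
    have FS: "(\<kappa> > 0 \<longleftrightarrow> w1 (fst q0) * w2 (snd q0) * deriv g1 (fst q0) * deriv g2 (snd q0) > 0)
        \<and> (\<kappa> < 0 \<longleftrightarrow> w1 (fst q0) * w2 (snd q0) * deriv g1 (fst q0) * deriv g2 (snd q0) < 0)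
        \<and> (\<kappa> = 0 \<longleftrightarrow> deriv g1 (fst q0) = 0 \<or> deriv g2 (snd q0) = 0)"
      by (rule final_sign[OF s0 nz(1)[OF u] nz(2)[OF v] ker ori _ refl refl _ kap[unfolded M.Af_def M.Bf_def M.Af'_def M.Bf'_def]])
         (use con in \<open>simp_all add: M.Dq_def algebra_simps\<close>)
    have Zq: "M.Zf q0 = w1 (fst q0) * w2 (snd q0) * deriv g1 (fst q0) * deriv g2 (snd q0)" by (simp add: M.Zf_def)
    have eqS: "{q\<in>U. g1 (fst q) * g2 (snd q) \<noteq> 1} = U - sing_set U g1 g2" by (auto simp: sing_set_def)
    have ntriv: "\<not> trivial_limit (at q0 within (U - sing_set U g1 g2))"
    proof -
      have "q0 \<in> closure (U - sing_set U g1 g2)" using dense q0U eqS by auto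
      moreover have "q0 \<notin> U - sing_set U g1 g2" using s0 by (simp add: sing_set_def)
      ultimately have "q0 islimpt (U - sing_set U g1 g2)" unfolding closure_def by blast
      then show ?thesis by (simp add: trivial_limit_within)
    qed
    have zeroK: "\<not> eventually P (at q0 within (U - sing_set U g1 g2))"
      if dz: "deriv g1 (fst q0) = 0 \<or> deriv g2 (snd q0) = 0" and P0: "\<And>q. gaussK f q = 0 \<Longrightarrow> \<not> P q" for P
    proof
      assume "eventually P (at q0 within (U - sing_set U g1 g2))"
      then obtain d where d: "d > 0" "\<And>x. x \<in> U - sing_set U g1 g2 \<Longrightarrow> x \<noteq> q0 \<and> dist x q0 < d \<Longrightarrow> P x"
        unfolding eventually_at by blast
      obtain q where q: "q \<in> U" "g1 (fst q) * g2 (snd q) \<noteq> 1" "q \<noteq> q0" "dist q q0 < d" "gaussK f q = 0"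
        using dz M.Kzero_u[OF q0U s0 _ d(1)] M.Kzero_v[OF q0U s0 _ d(1)] by blast
      have "q \<in> U - sing_set U g1 g2" using q(1,2) by (simp add: sing_set_def)
      then have "P q" using d(2) q(3,4) by blast
      then show False using P0 q(5) by blast
    qed
    have A1: "\<kappa> > 0 \<longleftrightarrow> (\<forall>\<^sub>F q in at q0 within (U - sing_set U g1 g2). gaussK f q > 0)"
    proof
      assume "\<kappa> > 0"
      then have "M.Zf q0 > 0" using FS Zq by simp
      then show "\<forall>\<^sub>F q in at q0 within (U - sing_set U g1 g2). gaussK f q > 0"
        using M.K_near[OF q0U] by simp
    next
      assume ev: "\<forall>\<^sub>F q in at q0 within (U - sing_set U g1 g2). gaussK f q > 0"
      show "\<kappa> > 0"
      proof (rule ccontr)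
        assume "\<not> \<kappa> > 0"
        then consider "\<kappa> < 0" | "\<kappa> = 0" by linarith
        then show False
        proof cases
          case 1
          then have "M.Zf q0 < 0" using FS Zq by simp
          then have "\<forall>\<^sub>F q in at q0 within (U - sing_set U g1 g2). gaussK f q < 0"
            using M.K_near[OF q0U] by simp
          with ev have "\<forall>\<^sub>F q in at q0 within (U - sing_set U g1 g2). False"
            by eventually_elim simp
          then show False using ntriv by (simp add: eventually_False)
        next
          case 2
          then show False using zeroK[of "\<lambda>q. gaussK f q > 0"] ev FS by simp
        qed
      qed
    qed
    have A2: "\<kappa> < 0 \<longleftrightarrow> (\<forall>\<^sub>F q in at q0 within (U - sing_set U g1 g2). gaussK f q < 0)"
    proof
      assume "\<kappa> < 0"
      then have "M.Zf q0 < 0" using FS Zq by simp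
      then show "\<forall>\<^sub>F q in at q0 within (U - sing_set U g1 g2). gaussK f q < 0"
        using M.K_near[OF q0U] by simp
    next
      assume ev: "\<forall>\<^sub>F q in at q0 within (U - sing_set U g1 g2). gaussK f q < 0"
      show "\<kappa> < 0"
      proof (rule ccontr)
        assume "\<not> \<kappa> < 0"
        then consider "\<kappa> > 0" | "\<kappa> = 0" by linarith
        then show False
        proof cases
          case 1
          then have "M.Zf q0 > 0" using FS Zq by simp
          then have "\<forall>\<^sub>F q in at q0 within (U - sing_set U g1 g2). gaussK f q > 0"
            using M.K_near[OF q0U] by simp
          with ev have "\<forall>\<^sub>F q in at q0 within (U - sing_set U g1 g2). False"
            by eventually_elim simp
          then show False using ntriv by (simp add: eventually_False)
        next
          case 2
          then show False using zeroK[of "\<lambda>q. gaussK f q < 0"] ev FS by simp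
        qed
      qed
    qed
    show "(sing_curv f g1 g2 \<gamma> \<eta> t > 0 \<longleftrightarrow>
              (\<forall>\<^sub>F q in at (\<gamma> t) within (U - sing_set U g1 g2). gaussK f q > 0)) \<and>
           (sing_curv f g1 g2 \<gamma> \<eta> t < 0 \<longleftrightarrow>
              (\<forall>\<^sub>F q in at (\<gamma> t) within (U - sing_set U g1 g2). gaussK f q < 0)) \<and>
           (sing_curv f g1 g2 \<gamma> \<eta> t = 0 \<longleftrightarrow>
              deriv g1 (fst (\<gamma> t)) = 0 \<or> deriv g2 (snd (\<gamma> t)) = 0)"
      using A1 A2 FS unfolding \<kappa>_def q0_def by blast
  qed
qed

end
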